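(* Let $(G,\circ)$ be a finite rooted cavity-monotone network, $k\in\mathbb N$, and suppose the ball $[G,\circ]_{2k+2}$ (subgraph induced by vertices at distance at most $2k+2$ from $\circ$) is a tree. Then for every $t>0$, $$U_{\mu_\circ}\big(x^{2k}_{i\to\circ}(t):i\in\partial\circ\big)\le\mathbb E^t_G\big[|\mathcal F\cap E_\circ|\big]\le U_{\mu_\circ}\big(x^{2k+1}_{i\to\circ}(t):i\in\partial\circ\big),$$ where $\mathbf x^0(t)=\mathbf 0$ and $\mathbf x^{k+1}(t)=t\Gamma_G(\mathbf x^k(t))$.
   Context: Measures over subsets: for a finite set $E$, a measure is $\mu:2^E\to[0,\infty)$; $Z(\mathbf w)=\sum_{F\subseteq E}\mu(F)\mathbf w^F$, $\mathbf w^F=\prod_{e\in F}w_e$; the cavity ratio is $\Gamma^e_\mu(\mathbf w')=Z^{/e}(\mathbf w')/Z^{\setminus e}(\mathbf w')$ where $Z^{\setminus e}(\mathbf w')=\sum_{F\not\ni e}\mu(F)\mathbf w'^F$, $Z^{/e}(\mathbf w')=\sum_{F\not\ni e}\mu(F\cup\{e\})\mathbf w'^F$; for $\mathbf w\in[0,\infty)^E$ with $Z(\mathbf w)>0$, $\mathbb P^{\mathbf w}_\mu(\mathcal F=F)=\mu(F)\mathbf w^F/Z(\mathbf w)$ and $U_\mu(\mathbf w)=\mathbb E^{\mathbf w}_\mu|\mathcal F|$. $\mu$ is Rayleigh if for all $\mathbf w\in(0,\infty)^E$, $e\neq f$: $\mathbb P^{\mathbf w}_\mu(e,f\in\mathcal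 F)\le\mathbb P^{\mathbf w}_\mu(e\in\mathcal F)\mathbb P^{\mathbf w}_\mu(f\in\mathcal F)$; size-increasing if for all $\mathbf w\in(0,\infty)^E$, $e\in E$: $\mathbb E^{\mathbf w}_\mu[|\mathcal F|\mathbf 1_{e\in\mathcal F}]>\mathbb E^{\mathbf w}_\mu|\mathcal F|\,\mathbb P^{\mathbf w}_\mu(e\in\mathcal F)$; cavity-monotone if $\mu(\emptyset)>0$, Rayleigh and size-increasing. Networks: a network is a simple locally finite graph $G=(V,E)$ with, for each $i\in V$, a local measure $\mu_i$ over the subsets of $E_i$ (edges incident to $i$); cavity-monotone if every $\mu_i$ is; $\partial i$ is the set of neighbours of $i$. For finite $G$: global measure $\mu(F)=\prod_{i}\mu_i(F\cap E_i)$; $Z(G;t)=\sum_{F\subseteq E}\mu(F)t^{|F|}$; Gibbs–Boltzmann law $\mathbb P^t_G(\mathcal F=F)=\mu(F)t^{|F|}/Z(G;t)$. Configurations $\mathbf x\in[0,\infty)^{\vec E}$; cavity operator $\Gamma_G(\mathbf x)_{i\to j}=\Gamma^{ij}_{\mu_i}(x_{k\to i}:k\in\partial i\setminus\{j\})$ (the variable of $\mu_i$ on edge $ik$ set to $x_{k\to i}$). *)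

theory Defs
  imports Complex_Main
begin

text \<open>A measure over the subsets of a finite set E is a function mu :: 'e set => real,
  nonnegative on the subsets of E (its values outside Pow E are irrelevant).\<close>

definition is_measure :: "'e set \<Rightarrow> ('e set \<Rightarrow> real) \<Rightarrow> bool" where
  "is_measure E mu \<longleftrightarrow> finite E \<and> (\<forall>F\<subseteq>E. mu F \<ge> 0)"

definition Zm :: "'e set \<Rightarrow> ('e set \<Rightarrow> real) \<Rightarrow> ('e \<Rightarrow> real) \<Rightarrow> real" where
  "Zm E mu w = (\<Sum>F\<in>Pow E. mu F * (\<Prod>e\<in>F. w e))"

definition Em :: "'e set \<Rightarrow> ('e set \<Rightarrow> real) \<Rightarrow> ('e \<Rightarrow> real) \<Rightarrow> ('e set \<Rightarrow> real) \<Rightarrow> real" where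
  "Em E mu w g = (\<Sum>F\<in>Pow E. mu F * (\<Prod>e\<in>F. w e) * g F) / Zm E mu w"

definition Pm :: "'e set \<Rightarrow> ('e set \<Rightarrow> real) \<Rightarrow> ('e \<Rightarrow> real) \<Rightarrow> ('e set \<Rightarrow> bool) \<Rightarrow> real" where
  "Pm E mu w P = Em E mu w (\<lambda>F. if P F then 1 else 0)"

definition Um :: "'e set \<Rightarrow> ('e set \<Rightarrow> real) \<Rightarrow> ('e \<Rightarrow> real) \<Rightarrow> real" where
  "Um E mu w = Em E mu w (\<lambda>F. real (card F))"

definition Z_del :: "'e set \<Rightarrow> ('e set \<Rightarrow> real) \<Rightarrow> 'e \<Rightarrow> ('e \<Rightarrow> real) \<Rightarrow> real" where
  "Z_del E mu e w = (\<Sum>F\<in>Pow (E - {e}). mu F * (\<Prod>f\<in>F. w f))"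

definition Z_con :: "'e set \<Rightarrow> ('e set \<Rightarrow> real) \<Rightarrow> 'e \<Rightarrow> ('e \<Rightarrow> real) \<Rightarrow> real" where
  "Z_con E mu e w = (\<Sum>F\<in>Pow (E - {e}). mu (insert e F) * (\<Prod>f\<in>F. w f))"

definition cavity_ratio :: "'e set \<Rightarrow> ('e set \<Rightarrow> real) \<Rightarrow> 'e \<Rightarrow> ('e \<Rightarrow> real) \<Rightarrow> real" where
  "cavity_ratio E mu e w = Z_con E mu e w / Z_del E mu e w"

definition rayleigh :: "'e set \<Rightarrow> ('e set \<Rightarrow> real) \<Rightarrow> bool" where
  "rayleigh E mu \<longleftrightarrow> (\<forall>w. (\<forall>e\<in>E. w e > 0) \<longrightarrow>
     (\<forall>e\<in>E. \<forall>f\<in>E. e \<noteq> f \<longrightarrow>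
        Pm E mu w (\<lambda>F. e \<in> F \<and> f \<in> F) \<le> Pm E mu w (\<lambda>F. e \<in> F) * Pm E mu w (\<lambda>F. f \<in> F)))"

definition size_increasing :: "'e set \<Rightarrow> ('e set \<Rightarrow> real) \<Rightarrow> bool" where
  "size_increasing E mu \<longleftrightarrow> (\<forall>w. (\<forall>e\<in>E. w e > 0) \<longrightarrow>
     (\<forall>e\<in>E. Em E mu w (\<lambda>F. real (card F) * (if e \<in> F then 1 else 0))
              > Em E mu w (\<lambda>F. real (card F)) * Pm E mu w (\<lambda>F. e \<in> F)))"

definition cavity_monotone :: "'e set \<Rightarrow> ('e set \<Rightarrow> real) \<Rightarrow> bool" where
  "cavity_monotone E mu \<longleftrightarrow> is_measure E mu \<and> mu {} > 0 \<and> rayleigh E mu \<and> size_increasing E mu"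

definition simple_graph :: "'v set \<Rightarrow> ('v \<Rightarrow> 'v \<Rightarrow> bool) \<Rightarrow> bool" where
  "simple_graph V adj \<longleftrightarrow> (\<forall>i j. adj i j \<longrightarrow> adj j i \<and> i \<noteq> j \<and> i \<in> V \<and> j \<in> V)"

definition edges :: "('v \<Rightarrow> 'v \<Rightarrow> bool) \<Rightarrow> 'v set set" where
  "edges adj = {{i, j} | i j. adj i j}"

definition inc_edges :: "('v \<Rightarrow> 'v \<Rightarrow> bool) \<Rightarrow> 'v \<Rightarrow> 'v set set" where
  "inc_edges adj i = {e \<in> edges adj. i \<in> e}"

definition nbrs :: "('v \<Rightarrow> 'v \<Rightarrow> bool) \<Rightarrow> 'v \<Rightarrow> 'v set" where
  "nbrs adj i = {j. adj i j}"

definition other :: "'v \<Rightarrow> 'v set \<Rightarrow> 'v" where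
  "other i e = (THE k. e = {i, k})"

definition cavity_monotone_network :: "'v set \<Rightarrow> ('v \<Rightarrow> 'v \<Rightarrow> bool) \<Rightarrow> ('v \<Rightarrow> 'v set set \<Rightarrow> real) \<Rightarrow> bool" where
  "cavity_monotone_network V adj mu \<longleftrightarrow> (\<forall>i\<in>V. cavity_monotone (inc_edges adj i) (mu i))"

definition global_measure :: "'v set \<Rightarrow> ('v \<Rightarrow> 'v \<Rightarrow> bool) \<Rightarrow> ('v \<Rightarrow> 'v set set \<Rightarrow> real) \<Rightarrow> 'v set set \<Rightarrow> real" where
  "global_measure V adj mu F = (\<Prod>i\<in>V. mu i (F \<inter> inc_edges adj i))"

definition Z_net :: "'v set \<Rightarrow> ('v \<Rightarrow> 'v \<Rightarrow> bool) \<Rightarrow> ('v \<Rightarrow> 'v set set \<Rightarrow> real) \<Rightarrow> real \<Rightarrow> real" where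
  "Z_net V adj mu t = (\<Sum>F\<in>Pow (edges adj). global_measure V adj mu F * t ^ card F)"

definition E_net :: "'v set \<Rightarrow> ('v \<Rightarrow> 'v \<Rightarrow> bool) \<Rightarrow> ('v \<Rightarrow> 'v set set \<Rightarrow> real) \<Rightarrow> real \<Rightarrow> ('v set set \<Rightarrow> real) \<Rightarrow> real" where
  "E_net V adj mu t g = (\<Sum>F\<in>Pow (edges adj). global_measure V adj mu F * t ^ card F * g F) / Z_net V adj mu t"

text \<open>Configurations x :: 'v => 'v => real, with x i j = x_{i->j}. The weight placed by vertex i
  on its incident edge {i,k} is x_{k->i}.\<close>
definition local_weights :: "('v \<Rightarrow> 'v \<Rightarrow> real) \<Rightarrow> 'v \<Rightarrow> 'v set \<Rightarrow> real" where
  "local_weights x i = (\<lambda>e. x (other i e) i)"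

definition cavity_op :: "('v \<Rightarrow> 'v \<Rightarrow> bool) \<Rightarrow> ('v \<Rightarrow> 'v set set \<Rightarrow> real) \<Rightarrow> ('v \<Rightarrow> 'v \<Rightarrow> real) \<Rightarrow> 'v \<Rightarrow> 'v \<Rightarrow> real" where
  "cavity_op adj mu x i j =
     (if adj i j then cavity_ratio (inc_edges adj i) (mu i) {i, j} (local_weights x i) else 0)"

fun xiter :: "('v \<Rightarrow> 'v \<Rightarrow> bool) \<Rightarrow> ('v \<Rightarrow> 'v set set \<Rightarrow> real) \<Rightarrow> real \<Rightarrow> nat \<Rightarrow> 'v \<Rightarrow> 'v \<Rightarrow> real" where
  "xiter adj mu t 0 = (\<lambda>i j. 0)"
| "xiter adj mu t (Suc n) = (\<lambda>i j. t * cavity_op adj mu (xiter adj mu t n) i j)"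

definition ball_vertices :: "'v set \<Rightarrow> ('v \<Rightarrow> 'v \<Rightarrow> bool) \<Rightarrow> 'v \<Rightarrow> nat \<Rightarrow> 'v set" where
  "ball_vertices V adj r n = {v \<in> V. \<exists>m\<le>n. (adj ^^ m) r v}"

definition induced :: "('v \<Rightarrow> 'v \<Rightarrow> bool) \<Rightarrow> 'v set \<Rightarrow> 'v \<Rightarrow> 'v \<Rightarrow> bool" where
  "induced adj B = (\<lambda>u v. adj u v \<and> u \<in> B \<and> v \<in> B)"

definition connected_graph :: "'v set \<Rightarrow> ('v \<Rightarrow> 'v \<Rightarrow> bool) \<Rightarrow> bool" where
  "connected_graph B A \<longleftrightarrow> B \<noteq> {} \<and> (\<forall>u\<in>B. \<forall>v\<in>B. A\<^sup>*\<^sup>* u v)"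

definition has_cycle :: "'v set \<Rightarrow> ('v \<Rightarrow> 'v \<Rightarrow> bool) \<Rightarrow> bool" where
  "has_cycle B A \<longleftrightarrow> (\<exists>cs. length cs \<ge> 3 \<and> distinct cs \<and> set cs \<subseteq> B \<and>
      (\<forall>i<length cs. A (cs ! i) (cs ! ((i + 1) mod length cs))))"

definition is_tree :: "'v set \<Rightarrow> ('v \<Rightarrow> 'v \<Rightarrow> bool) \<Rightarrow> bool" where
  "is_tree B A \<longleftrightarrow> connected_graph B A \<and> \<not> has_cycle B A"

definition ball_is_tree :: "'v set \<Rightarrow> ('v \<Rightarrow> 'v \<Rightarrow> bool) \<Rightarrow> 'v \<Rightarrow> nat \<Rightarrow> bool" where
  "ball_is_tree V adj r n \<longleftrightarrow>
     is_tree (ball_vertices V adj r n) (induced adj (ball_vertices V adj r n))"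

end

theory Submission
  imports Defs
begin

lemma sum_pow_insert:
  assumes "finite C" "i \<notin> C"
  shows "(\<Sum>F\<in>Pow (insert i C). h F) = (\<Sum>F\<in>Pow C. h F) + (\<Sum>F\<in>Pow C. h (insert i F))"
proof -
  have "Pow (insert i C) = Pow C \<union> insert i ` Pow C" by (rule Pow_insert)
  moreover have "Pow C \<inter> insert i ` Pow C = {}" using assms by auto
  moreover have "inj_on (insert i) (Pow C)" using assms unfolding inj_on_def
    by (metis Diff_insert_absorb Pow_iff subsetD)
  ultimately show ?thesis using assms
    by (simp add: sum.union_disjoint sum.reindex)
qed

lemma sum_pow_remove:
  assumes "finite E" "i \<in> E"
  shows "(\<Sum>F\<in>Pow E. h F) = (\<Sum>F\<in>Pow (E - {i}). h F) + (\<Sum>F\<in>Pow (E - {i}). h (insert i F))"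
proof -
  have "E = insert i (E - {i})" using assms by auto
  then have "(\<Sum>F\<in>Pow E. h F) = (\<Sum>F\<in>Pow (insert i (E - {i})). h F)" by simp
  also have "\<dots> = (\<Sum>F\<in>Pow (E - {i}). h F) + (\<Sum>F\<in>Pow (E - {i}). h (insert i F))"
    by (rule sum_pow_insert) (use assms in auto)
  finally show ?thesis .
qed

lemma sum_pow_union:
  assumes "finite A" "finite B" "A \<inter> B = {}"
  shows "(\<Sum>F\<in>Pow (A \<union> B). h F) = (\<Sum>X\<in>Pow A. \<Sum>Y\<in>Pow B. h (X \<union> Y))"
proof -
  have "(\<Sum>F\<in>Pow (A \<union> B). h F) = (\<Sum>p\<in>Pow A \<times> Pow B. h (fst p \<union> snd p))"
    by (rule sum.reindex_bij_witness[where j="\<lambda>F. (F \<inter> A, F \<inter> B)" and i="\<lambda>p. fst p \<union> snd p"])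
       (use assms in \<open>auto simp flip: Int_Un_distrib simp: Int_absorb2\<close>)
  also have "\<dots> = (\<Sum>X\<in>Pow A. \<Sum>Y\<in>Pow B. h (X \<union> Y))"
    by (simp add: sum.cartesian_product case_prod_beta)
  finally show ?thesis .
qed

lemma sum_pow_prod_disjoint:
  fixes h :: "'i \<Rightarrow> 'e set \<Rightarrow> real"
  assumes "finite I" "\<And>i. i \<in> I \<Longrightarrow> finite (A i)"
    and "\<And>i j. i \<in> I \<Longrightarrow> j \<in> I \<Longrightarrow> i \<noteq> j \<Longrightarrow> A i \<inter> A j = {}"
  shows "(\<Sum>R\<in>Pow (\<Union>i\<in>I. A i). \<Prod>i\<in>I. h i (R \<inter> A i)) = (\<Prod>i\<in>I. \<Sum>S\<in>Pow (A i). h i S)"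
  using assms
proof (induction I rule: finite_induct)
  case empty
  then show ?case by simp
next
  case (insert j I)
  have disj: "A j \<inter> (\<Union>i\<in>I. A i) = {}" using insert by blast
  have fin: "finite (\<Union>i\<in>I. A i)" using insert by auto
  have "(\<Sum>R\<in>Pow (\<Union>i\<in>insert j I. A i). \<Prod>i\<in>insert j I. h i (R \<inter> A i))
      = (\<Sum>X\<in>Pow (A j). \<Sum>Y\<in>Pow (\<Union>i\<in>I. A i). \<Prod>i\<in>insert j I. h i ((X \<union> Y) \<inter> A i))"
    using sum_pow_union[OF _ fin disj] insert by simp
  also have "\<dots> = (\<Sum>X\<in>Pow (A j). \<Sum>Y\<in>Pow (\<Union>i\<in>I. A i). h j X * (\<Prod>i\<in>I. h i (Y \<inter> A i)))"
  proof (intro sum.cong refl)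
    fix X Y assume X: "X \<in> Pow (A j)" and Y: "Y \<in> Pow (\<Union>i\<in>I. A i)"
    have "(X \<union> Y) \<inter> A j = X" using X Y disj by auto
    moreover have "\<And>i. i \<in> I \<Longrightarrow> (X \<union> Y) \<inter> A i = Y \<inter> A i"
    proof -
      fix i assume i: "i \<in> I"
      have "A j \<inter> A i = {}" using insert.prems(2) i insert.hyps(2) by (metis insertCI)
      then show "(X \<union> Y) \<inter> A i = Y \<inter> A i" using X by auto
    qed
    ultimately show "(\<Prod>i\<in>insert j I. h i ((X \<union> Y) \<inter> A i)) = h j X * (\<Prod>i\<in>I. h i (Y \<inter> A i))"
      using insert.hyps by (simp cong: prod.cong)
  qed
  also have "\<dots> = (\<Sum>X\<in>Pow (A j). h j X) * (\<Sum>Y\<in>Pow (\<Union>i\<in>I. A i). \<Prod>i\<in>I. h i (Y \<inter> A i))"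
    by (simp only: sum_product)
  also have "\<dots> = (\<Sum>X\<in>Pow (A j). h j X) * (\<Prod>i\<in>I. \<Sum>S\<in>Pow (A i). h i S)"
    using insert by simp
  also have "\<dots> = (\<Prod>i\<in>insert j I. \<Sum>S\<in>Pow (A i). h i S)" using insert.hyps by simp
  finally show ?case .
qed



definition hom :: "'e set \<Rightarrow> ('e set \<Rightarrow> real) \<Rightarrow> ('e \<Rightarrow> real) \<Rightarrow> ('e \<Rightarrow> real) \<Rightarrow> real" where
  "hom C c p q = (\<Sum>S\<in>Pow C. c S * (\<Prod>e\<in>S. p e) * (\<Prod>e\<in>C - S. q e))"

definition homw :: "'e set \<Rightarrow> ('e set \<Rightarrow> real) \<Rightarrow> ('e \<Rightarrow> real) \<Rightarrow> real" where
  "homw C c w = (\<Sum>S\<in>Pow C. c S * (\<Prod>e\<in>S. w e))"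

lemma hom_insert:
  assumes "finite C" "i \<notin> C"
  shows "hom (insert i C) c p q = q i * hom C c p q + p i * hom C (\<lambda>S. c (insert i S)) p q"
proof -
  have A: "c S * (\<Prod>e\<in>S. p e) * (\<Prod>e\<in>insert i C - S. q e) = q i * (c S * (\<Prod>e\<in>S. p e) * (\<Prod>e\<in>C - S. q e))"
    if "S \<in> Pow C" for S
  proof -
    have "insert i C - S = insert i (C - S)" using that assms by auto
    then show ?thesis using assms by simp
  qed
  have B: "c (insert i S) * (\<Prod>e\<in>insert i S. p e) * (\<Prod>e\<in>insert i C - insert i S. q e) = p i * (c (insert i S) * (\<Prod>e\<in>S. p e) * (\<Prod>e\<in>C - S. q e))"
    if "S \<in> Pow C" for S
  proof -
    have "insert i C - insert i S = C - S" using that assms by auto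
    moreover have "i \<notin> S" "finite S" using that assms finite_subset by auto
    ultimately show ?thesis by simp
  qed
  show ?thesis unfolding hom_def sum_pow_insert[OF assms] sum_distrib_left
    by (intro arg_cong2[where f="(+)"] sum.cong refl) (use A B in auto)
qed

lemma homw_insert:
  assumes "finite C" "i \<notin> C"
  shows "homw (insert i C) c w = homw C c w + w i * homw C (\<lambda>S. c (insert i S)) w"
proof -
  have B: "c (insert i S) * (\<Prod>e\<in>insert i S. w e) = w i * (c (insert i S) * (\<Prod>e\<in>S. w e))"
    if "S \<in> Pow C" for S
  proof -
    have "i \<notin> S" "finite S" using that assms finite_subset by auto
    then show ?thesis by simp
  qed
  show ?thesis unfolding homw_def sum_pow_insert[OF assms] sum_distrib_left
    by (intro arg_cong2[where f="(+)"] sum.cong refl) (use B in auto)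
qed

lemma hom_lin: "hom C (\<lambda>S. c0 S + s * c1 S) p q = hom C c0 p q + s * hom C c1 p q"
  unfolding hom_def by (simp add: algebra_simps sum.distrib sum_distrib_left)

lemma homw_lin: "homw C (\<lambda>S. c0 S + s * c1 S) w = homw C c0 w + s * homw C c1 w"
  unfolding homw_def by (simp add: algebra_simps sum.distrib sum_distrib_left)

lemma homw_cong: "(\<And>e. e \<in> C \<Longrightarrow> w e = w' e) \<Longrightarrow> homw C c w = homw C c w'"
  unfolding homw_def by (intro sum.cong refl arg_cong2[where f="(*)"] prod.cong) auto

lemma hom_le:
  assumes "finite C"
    and "\<And>w. (\<forall>e\<in>C. 0 \<le> w e \<and> w e \<le> x e) \<Longrightarrow> 0 \<le> homw C c w"
    and "\<forall>e\<in>C. 0 \<le> p e \<and> 0 \<le> q e \<and> p e \<le> x e * q e"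
  shows "0 \<le> hom C c p q"
  using assms
proof (induction C arbitrary: c rule: finite_induct)
  case empty
  then show ?case using empty(1)[of "\<lambda>_. 0"] by (simp add: hom_def homw_def)
next
  case (insert i C)
  let ?c1 = "\<lambda>S. c (insert i S)"
  have key: "0 \<le> hom C c p q + s * hom C ?c1 p q" if s: "0 \<le> s" "s \<le> x i" for s
  proof -
    have "0 \<le> hom C (\<lambda>S. c S + s * ?c1 S) p q"
    proof (rule insert.IH)
      fix w assume w: "\<forall>e\<in>C. 0 \<le> w e \<and> w e \<le> x e"
      have "homw C (\<lambda>S. c S + s * ?c1 S) w = homw C c (w(i:=s)) + s * homw C ?c1 (w(i:=s))" (is "_ = ?R")
      proof -
        have "\<And>c'. homw C c' (w(i:=s)) = homw C c' w"
          by (rule homw_cong) (use insert.hyps in auto)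
        then show ?thesis unfolding homw_lin by simp
      qed
      also have "\<dots> = homw (insert i C) c (w(i:=s))"
        using homw_insert[OF insert.hyps] by simp
      also have "0 \<le> \<dots>" using insert.prems(1) w s by auto
      finally show "0 \<le> homw C (\<lambda>S. c S + s * ?c1 S) w" by simp
    next
      show "\<forall>e\<in>C. 0 \<le> p e \<and> 0 \<le> q e \<and> p e \<le> x e * q e" using insert.prems by auto
    qed
    then show ?thesis by (simp add: hom_lin)
  qed
  have pq: "0 \<le> p i" "0 \<le> q i" "p i \<le> x i * q i" using insert.prems by auto
  show ?case
  proof (cases "q i = 0")
    case True
    then have "p i = 0" using pq by auto
    then show ?thesis using True hom_insert[OF insert.hyps] by simp
  next
    case False
    then have qp: "q i > 0" using pq by auto
    define s where "s = p i / q i"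
    have "0 \<le> s" "s \<le> x i" using pq qp by (auto simp: s_def divide_simps)
    then have "0 \<le> q i * (hom C c p q + s * hom C ?c1 p q)" using key qp by simp
    also have "\<dots> = hom (insert i C) c p q"
      using hom_insert[OF insert.hyps] qp by (simp add: s_def algebra_simps)
    finally show ?thesis .
  qed
qed

lemma hom_ge:
  assumes "finite C"
    and "\<And>w. (\<forall>e\<in>C. x e \<le> w e) \<Longrightarrow> 0 \<le> homw C c w"
    and "\<forall>e\<in>C. 0 \<le> p e \<and> 0 \<le> q e \<and> x e * q e \<le> p e"
  shows "0 \<le> hom C c p q"
  using assms
proof (induction C arbitrary: c rule: finite_induct)
  case empty
  then show ?case using empty(1)[of "\<lambda>_. 0"] by (simp add: hom_def homw_def)
next
  case (insert i C)
  let ?c1 = "\<lambda>S. c (insert i S)"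
  have key: "0 \<le> hom C c p q + s * hom C ?c1 p q" if s: "x i \<le> s" for s
  proof -
    have "0 \<le> hom C (\<lambda>S. c S + s * ?c1 S) p q"
    proof (rule insert.IH)
      fix w assume w: "\<forall>e\<in>C. x e \<le> w e"
      have "homw C (\<lambda>S. c S + s * ?c1 S) w = homw C c (w(i:=s)) + s * homw C ?c1 (w(i:=s))" (is "_ = ?R")
      proof -
        have "\<And>c'. homw C c' (w(i:=s)) = homw C c' w"
          by (rule homw_cong) (use insert.hyps in auto)
        then show ?thesis unfolding homw_lin by simp
      qed
      also have "\<dots> = homw (insert i C) c (w(i:=s))"
        using homw_insert[OF insert.hyps] by simp
      also have "0 \<le> \<dots>" using insert.prems(1) w s by auto
      finally show "0 \<le> homw C (\<lambda>S. c S + s * ?c1 S) w" by simp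
    next
      show "\<forall>e\<in>C. 0 \<le> p e \<and> 0 \<le> q e \<and> x e * q e \<le> p e" using insert.prems by auto
    qed
    then show ?thesis by (simp add: hom_lin)
  qed
  have pq: "0 \<le> p i" "0 \<le> q i" "x i * q i \<le> p i" using insert.prems by auto
  show ?case
  proof (cases "q i = 0")
    case True
    have h1: "0 \<le> hom C ?c1 p q"
    proof (rule ccontr)
      assume "\<not> 0 \<le> hom C ?c1 p q"
      then have neg: "hom C ?c1 p q < 0" by simp
      define s where "s = max (x i) ((\<bar>hom C c p q\<bar> + 1) / (- hom C ?c1 p q))"
      have "x i \<le> s" by (simp add: s_def)
      have "s * hom C ?c1 p q \<le> ((\<bar>hom C c p q\<bar> + 1) / (- hom C ?c1 p q)) * hom C ?c1 p q"
        using neg by (intro mult_right_mono_neg) (auto simp: s_def)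
      also have "\<dots> = - (\<bar>hom C c p q\<bar> + 1)" using neg by (simp add: divide_simps)
      finally have "hom C c p q + s * hom C ?c1 p q < 0" by linarith
      then show False using key[OF \<open>x i \<le> s\<close>] by simp
    qed
    then show ?thesis using True hom_insert[OF insert.hyps] pq by simp
  next
    case False
    then have qp: "q i > 0" using pq by auto
    define s where "s = p i / q i"
    have "x i \<le> s" using pq qp by (auto simp: s_def divide_simps)
    then have "0 \<le> q i * (hom C c p q + s * hom C ?c1 p q)" using key qp by simp
    also have "\<dots> = hom (insert i C) c p q"
      using hom_insert[OF insert.hyps] qp by (simp add: s_def algebra_simps)
    finally show ?thesis .
  qed
qed



lemma nonneg_limit:
  fixes f :: "real \<Rightarrow> real"
  assumes "(f \<longlongrightarrow> f0) (at_right 0)" and "\<And>\<epsilon>. \<epsilon> > 0 \<Longrightarrow> 0 \<le> f \<epsilon>"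
  shows "0 \<le> f0"
  by (rule tendsto_lowerbound[OF assms(1)])
     (auto intro: eventually_mono[OF eventually_at_right_less] assms(2))

lemma prod_upd_notin: "i \<notin> F \<Longrightarrow> (\<Prod>x\<in>F. (w(i:=s)) x) = (\<Prod>x\<in>F. w x)"
  by (rule prod.cong) auto

lemma prod_insert_w: "finite F \<Longrightarrow> i \<notin> F \<Longrightarrow> (\<Prod>x\<in>insert i F. w x) = w i * (\<Prod>x\<in>F. w x)"
  by simp

lemma prod_insert_sub: "finite E \<Longrightarrow> F \<subseteq> E - {i} \<Longrightarrow> (\<Prod>x\<in>insert i F. w x) = w i * (\<Prod>x\<in>F. w x)"
  by (subst prod.insert) (auto dest: finite_subset)

lemma prod_insert_sub2: "finite E \<Longrightarrow> F \<subseteq> E - {e} - {i} \<Longrightarrow> (\<Prod>x\<in>insert i F. w x) = w i * (\<Prod>x\<in>F. w x)"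
  by (subst prod.insert) (auto dest: finite_subset)

lemma prod_insert_sub3: "finite E \<Longrightarrow> F \<subseteq> E - {i} - {f} \<Longrightarrow> (\<Prod>x\<in>insert i F. w x) = w i * (\<Prod>x\<in>F. w x)"
  by (subst prod.insert) (auto dest: finite_subset)

lemma measure_nonneg: "is_measure E mu \<Longrightarrow> F \<subseteq> E \<Longrightarrow> 0 \<le> mu F"
  unfolding is_measure_def by auto

lemma Zm_pos:
  assumes "is_measure E mu" "mu {} > 0" "\<forall>e\<in>E. 0 \<le> w e"
  shows "Zm E mu w > 0"
proof -
  have fin: "finite E" using assms unfolding is_measure_def by auto
  have "0 < mu {} * (\<Prod>e\<in>{}. w e)" using assms by simp
  also have "\<dots> \<le> Zm E mu w" unfolding Zm_def
    by (rule member_le_sum[where f="\<lambda>F. mu F * (\<Prod>e\<in>F. w e)"])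
       (use fin assms in \<open>auto intro!: mult_nonneg_nonneg prod_nonneg simp: is_measure_def\<close>)
  finally show ?thesis .
qed

lemma Z_del_pos:
  assumes "is_measure E mu" "mu {} > 0" "\<forall>x\<in>E - {e}. 0 \<le> w x"
  shows "Z_del E mu e w > 0"
proof -
  have fin: "finite E" using assms unfolding is_measure_def by auto
  have "0 < mu {} * (\<Prod>e\<in>{}. w e)" using assms by simp
  also have "\<dots> \<le> Z_del E mu e w" unfolding Z_del_def
    by (rule member_le_sum[where f="\<lambda>F. mu F * (\<Prod>e\<in>F. w e)"])
       (use fin assms in \<open>auto intro!: mult_nonneg_nonneg prod_nonneg simp: is_measure_def\<close>)
  finally show ?thesis .
qed

lemma Z_con_nonneg:
  assumes "is_measure E mu" "e \<in> E" "\<forall>x\<in>E - {e}. 0 \<le> w x"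
  shows "Z_con E mu e w \<ge> 0"
  unfolding Z_con_def
proof (rule sum_nonneg)
  fix F assume F: "F \<in> Pow (E - {e})"
  then have "insert e F \<subseteq> E" using assms by auto
  then have "0 \<le> mu (insert e F)" by (rule measure_nonneg[OF assms(1)])
  moreover have "0 \<le> (\<Prod>x\<in>F. w x)" using F assms by (intro prod_nonneg) auto
  ultimately show "0 \<le> mu (insert e F) * (\<Prod>x\<in>F. w x)" by simp
qed

lemma cavity_ratio_nonneg:
  assumes "is_measure E mu" "mu {} > 0" "e \<in> E" "\<forall>x\<in>E - {e}. 0 \<le> w x"
  shows "cavity_ratio E mu e w \<ge> 0"
  unfolding cavity_ratio_def using Z_con_nonneg[OF assms(1,3,4)] Z_del_pos[OF assms(1,2,4)] by simp

lemma Zm_cong: "(\<And>x. x \<in> E \<Longrightarrow> w x = w' x) \<Longrightarrow> Zm E mu w = Zm E mu w'"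
  unfolding Zm_def by (intro sum.cong refl arg_cong2[where f="(*)"] prod.cong) auto

lemma Em_cong:
  assumes "\<And>x. x \<in> E \<Longrightarrow> w x = w' x"
  shows "Em E mu w g = Em E mu w' g"
proof -
  have "(\<Sum>F\<in>Pow E. mu F * (\<Prod>e\<in>F. w e) * g F) = (\<Sum>F\<in>Pow E. mu F * (\<Prod>e\<in>F. w' e) * g F)"
    using assms by (intro sum.cong refl arg_cong2[where f="(*)"] prod.cong) auto
  then show ?thesis unfolding Em_def using Zm_cong[of E w w' mu] assms by simp
qed

lemma Um_cong: "(\<And>x. x \<in> E \<Longrightarrow> w x = w' x) \<Longrightarrow> Um E mu w = Um E mu w'"
  unfolding Um_def by (rule Em_cong)

lemma Z_del_cong: "(\<And>x. x \<in> E - {e} \<Longrightarrow> w x = w' x) \<Longrightarrow> Z_del E mu e w = Z_del E mu e w'"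
  unfolding Z_del_def by (intro sum.cong refl arg_cong2[where f="(*)"] prod.cong) auto

lemma Z_con_cong: "(\<And>x. x \<in> E - {e} \<Longrightarrow> w x = w' x) \<Longrightarrow> Z_con E mu e w = Z_con E mu e w'"
  unfolding Z_con_def by (intro sum.cong refl arg_cong2[where f="(*)"] prod.cong) auto

lemma cavity_ratio_cong: "(\<And>x. x \<in> E - {e} \<Longrightarrow> w x = w' x) \<Longrightarrow> cavity_ratio E mu e w = cavity_ratio E mu e w'"
  unfolding cavity_ratio_def using Z_del_cong Z_con_cong by metis

definition numU :: "'e set \<Rightarrow> ('e set \<Rightarrow> real) \<Rightarrow> ('e \<Rightarrow> real) \<Rightarrow> real" where
  "numU E mu w = (\<Sum>F\<in>Pow E. mu F * (\<Prod>e\<in>F. w e) * real (card F))"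

lemma Um_eq: "Um E mu w = numU E mu w / Zm E mu w"
  unfolding Um_def Em_def numU_def by simp

section \<open>Size-increasing implies monotonicity of U\<close>

definition N0 :: "'e set \<Rightarrow> ('e set \<Rightarrow> real) \<Rightarrow> 'e \<Rightarrow> ('e \<Rightarrow> real) \<Rightarrow> real" where
  "N0 E mu i w = (\<Sum>F\<in>Pow (E - {i}). mu F * (\<Prod>e\<in>F. w e) * real (card F))"

definition N1 :: "'e set \<Rightarrow> ('e set \<Rightarrow> real) \<Rightarrow> 'e \<Rightarrow> ('e \<Rightarrow> real) \<Rightarrow> real" where
  "N1 E mu i w = (\<Sum>F\<in>Pow (E - {i}). mu (insert i F) * (\<Prod>e\<in>F. w e) * (real (card F) + 1))"

lemma Zm_split:
  assumes "finite E" "i \<in> E"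
  shows "Zm E mu w = Z_del E mu i w + w i * Z_con E mu i w"
proof -
  have "(\<Sum>F\<in>Pow (E - {i}). mu (insert i F) * (\<Prod>e\<in>insert i F. w e))
      = (\<Sum>F\<in>Pow (E - {i}). w i * (mu (insert i F) * (\<Prod>e\<in>F. w e)))"
    using assms by (intro sum.cong refl) (auto simp: prod_insert_sub)
  then show ?thesis unfolding Zm_def Z_del_def Z_con_def sum_pow_remove[OF assms]
    by (simp add: sum_distrib_left)
qed

lemma numU_split:
  assumes "finite E" "i \<in> E"
  shows "numU E mu w = N0 E mu i w + w i * N1 E mu i w"
proof -
  have "(\<Sum>F\<in>Pow (E - {i}). mu (insert i F) * (\<Prod>e\<in>insert i F. w e) * real (card (insert i F)))
      = (\<Sum>F\<in>Pow (E - {i}). w i * (mu (insert i F) * (\<Prod>e\<in>F. w e) * (real (card F) + 1)))"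
  proof (intro sum.cong refl)
    fix F assume "F \<in> Pow (E - {i})"
    then have "finite F" "i \<notin> F" using assms finite_subset by auto
    then show "mu (insert i F) * (\<Prod>e\<in>insert i F. w e) * real (card (insert i F))
      = w i * (mu (insert i F) * (\<Prod>e\<in>F. w e) * (real (card F) + 1))" by simp
  qed
  then show ?thesis unfolding numU_def N0_def N1_def sum_pow_remove[OF assms]
    by (simp add: sum_distrib_left)
qed

lemma indic_sum:
  assumes "finite E" "i \<in> E"
  shows "(\<Sum>F\<in>Pow E. mu F * (\<Prod>e\<in>F. w e) * (if i \<in> F then 1 else 0)) = w i * Z_con E mu i w"
proof -
  have "(\<Sum>F\<in>Pow (E - {i}). mu (insert i F) * (\<Prod>e\<in>insert i F. w e) * (if i \<in> insert i F then 1 else 0))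
      = (\<Sum>F\<in>Pow (E - {i}). w i * (mu (insert i F) * (\<Prod>e\<in>F. w e)))"
    using assms by (intro sum.cong refl) (auto simp: prod_insert_sub)
  moreover have "(\<Sum>F\<in>Pow (E - {i}). mu F * (\<Prod>e\<in>F. w e) * (if i \<in> F then 1 else 0)) = 0"
    by (intro sum.neutral) auto
  ultimately show ?thesis unfolding Z_con_def sum_pow_remove[OF assms]
    by (simp add: sum_distrib_left)
qed

lemma card_indic_sum:
  assumes "finite E" "i \<in> E"
  shows "(\<Sum>F\<in>Pow E. mu F * (\<Prod>e\<in>F. w e) * (real (card F) * (if i \<in> F then 1 else 0))) = w i * N1 E mu i w"
proof -
  have "(\<Sum>F\<in>Pow (E - {i}). mu (insert i F) * (\<Prod>e\<in>insert i F. w e) * (real (card (insert i F)) * (if i \<in> insert i F then 1 else 0)))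
      = (\<Sum>F\<in>Pow (E - {i}). w i * (mu (insert i F) * (\<Prod>e\<in>F. w e) * (real (card F) + 1)))"
  proof (intro sum.cong refl)
    fix F assume "F \<in> Pow (E - {i})"
    then have "finite F" "i \<notin> F" using assms finite_subset by auto
    then show "mu (insert i F) * (\<Prod>e\<in>insert i F. w e) * (real (card (insert i F)) * (if i \<in> insert i F then 1 else 0))
      = w i * (mu (insert i F) * (\<Prod>e\<in>F. w e) * (real (card F) + 1))" by simp
  qed
  moreover have "(\<Sum>F\<in>Pow (E - {i}). mu F * (\<Prod>e\<in>F. w e) * (real (card F) * (if i \<in> F then 1 else 0))) = 0"
    by (intro sum.neutral) auto
  ultimately show ?thesis unfolding N1_def sum_pow_remove[OF assms]
    by (simp add: sum_distrib_left)
qed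

lemma arith_div: "(z::real) > 0 \<Longrightarrow> a / z > b / z * (c / z) \<Longrightarrow> a * z > b * c"
proof -
  assume z: "z > 0" and h: "a / z > b / z * (c / z)"
  have "b / z * (c / z) = (b * c) / (z * z)" by simp
  with h have "a / z > (b * c) / (z * z)" by simp
  then have "a / z * (z * z) > (b * c) / (z * z) * (z * z)" using z by (intro mult_strict_right_mono) auto
  then show ?thesis using z by (simp add: mult.assoc[symmetric])
qed

lemma arith_cancel: "(a::real) > 0 \<Longrightarrow> a * b * c > d * (a * e) \<Longrightarrow> b * c > d * e"
  by (simp add: mult.assoc mult.left_commute[of a])

lemma arith_cross: "(n1::real) * (zd + wi * zc) > (n0 + wi * n1) * zc \<Longrightarrow> n0 * zc \<le> n1 * zd"
  by (simp add: algebra_simps)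

lemma si_cross_pos:
  assumes "is_measure E mu" "mu {} > 0" "size_increasing E mu" "i \<in> E"
    and w: "\<forall>e\<in>E. 0 < w e"
  shows "N0 E mu i w * Z_con E mu i w \<le> N1 E mu i w * Z_del E mu i w"
proof -
  have fin: "finite E" using assms unfolding is_measure_def by auto
  let ?Z = "Zm E mu w"
  have Z: "?Z > 0" using Zm_pos[OF assms(1,2)] w by (simp add: less_imp_le)
  have "Em E mu w (\<lambda>F. real (card F) * (if i \<in> F then 1 else 0))
          > Em E mu w (\<lambda>F. real (card F)) * Pm E mu w (\<lambda>F. i \<in> F)"
    using assms unfolding size_increasing_def by blast
  then have "w i * N1 E mu i w / ?Z > numU E mu w / ?Z * (w i * Z_con E mu i w / ?Z)"
    unfolding Em_def Pm_def card_indic_sum[OF fin assms(4)] indic_sum[OF fin assms(4)] numU_def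
    by simp
  then have h: "w i * N1 E mu i w * ?Z > numU E mu w * (w i * Z_con E mu i w)"
    using Z by (rule arith_div[rotated])
  have "w i > 0" using w assms(4) by blast
  then have "N1 E mu i w * ?Z > numU E mu w * Z_con E mu i w"
    using h by (rule arith_cancel)
  then have "N1 E mu i w * (Z_del E mu i w + w i * Z_con E mu i w) > (N0 E mu i w + w i * N1 E mu i w) * Z_con E mu i w"
    by (simp only: Zm_split[OF fin assms(4)] numU_split[OF fin assms(4)])
  then show ?thesis by (rule arith_cross)
qed

lemma si_cross:
  assumes "is_measure E mu" "mu {} > 0" "size_increasing E mu" "i \<in> E"
    and w: "\<forall>e\<in>E. 0 \<le> w e"
  shows "N0 E mu i w * Z_con E mu i w \<le> N1 E mu i w * Z_del E mu i w"
proof -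
  let ?f = "\<lambda>\<epsilon>. N1 E mu i (\<lambda>e. w e + \<epsilon>) * Z_del E mu i (\<lambda>e. w e + \<epsilon>) - N0 E mu i (\<lambda>e. w e + \<epsilon>) * Z_con E mu i (\<lambda>e. w e + \<epsilon>)"
  have "(?f \<longlongrightarrow> N1 E mu i w * Z_del E mu i w - N0 E mu i w * Z_con E mu i w) (at_right 0)"
    unfolding N0_def N1_def Z_del_def Z_con_def by (auto intro!: tendsto_eq_intros)
  moreover have "0 \<le> ?f \<epsilon>" if "\<epsilon> > 0" for \<epsilon>
  proof -
    have "\<forall>e\<in>E. 0 < w e + \<epsilon>" using w that by (auto intro: add_nonneg_pos)
    from si_cross_pos[OF assms(1-4) this] show ?thesis by simp
  qed
  ultimately have "0 \<le> N1 E mu i w * Z_del E mu i w - N0 E mu i w * Z_con E mu i w"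
    by (rule nonneg_limit)
  then show ?thesis by simp
qed

lemma arith_frac_mono:
  fixes n0 n1 d0 d1 s s' :: real
  assumes "d0 > 0" "d1 \<ge> 0" "0 \<le> s" "s \<le> s'" "n0 * d1 \<le> n1 * d0"
  shows "(n0 + s * n1) / (d0 + s * d1) \<le> (n0 + s' * n1) / (d0 + s' * d1)"
proof -
  have p1: "d0 + s * d1 > 0" "d0 + s' * d1 > 0" using assms by (auto intro: add_pos_nonneg)
  have eq: "(n0 + s' * n1) * (d0 + s * d1) - (n0 + s * n1) * (d0 + s' * d1) = (s' - s) * (n1 * d0 - n0 * d1)"
    by (simp add: algebra_simps)
  have "0 \<le> (s' - s) * (n1 * d0 - n0 * d1)" using assms by (intro mult_nonneg_nonneg) auto
  then have "(n0 + s * n1) * (d0 + s' * d1) \<le> (n0 + s' * n1) * (d0 + s * d1)" using eq by linarith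
  then show ?thesis using p1 by (simp add: divide_simps)
qed

lemma arith_frac_anti:
  fixes n0 n1 d0 d1 s s' :: real
  assumes "d0 > 0" "d1 \<ge> 0" "0 \<le> s" "s \<le> s'" "n1 * d0 \<le> n0 * d1"
  shows "(n0 + s' * n1) / (d0 + s' * d1) \<le> (n0 + s * n1) / (d0 + s * d1)"
proof -
  have p1: "d0 + s * d1 > 0" "d0 + s' * d1 > 0" using assms by (auto intro: add_pos_nonneg)
  have eq: "(n0 + s * n1) * (d0 + s' * d1) - (n0 + s' * n1) * (d0 + s * d1) = (s' - s) * (n0 * d1 - n1 * d0)"
    by (simp add: algebra_simps)
  have "0 \<le> (s' - s) * (n0 * d1 - n1 * d0)" using assms by (intro mult_nonneg_nonneg) auto
  then have "(n0 + s' * n1) * (d0 + s * d1) \<le> (n0 + s * n1) * (d0 + s' * d1)" using eq by linarith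
  then show ?thesis using p1 by (simp add: divide_simps)
qed

lemma Um_mono1:
  assumes cm: "cavity_monotone E mu" and i: "i \<in> E" and w: "\<forall>e\<in>E. 0 \<le> w e"
    and s: "0 \<le> s" "s \<le> s'"
  shows "Um E mu (w(i:=s)) \<le> Um E mu (w(i:=s'))"
proof -
  have m: "is_measure E mu" "mu {} > 0" "size_increasing E mu"
    using cm unfolding cavity_monotone_def by auto
  have fin: "finite E" using m unfolding is_measure_def by auto
  have c1: "\<And>t. N0 E mu i (w(i:=t)) = N0 E mu i w"
    unfolding N0_def by (intro sum.cong refl arg_cong2[where f="(*)"] prod.cong) auto
  have c2: "\<And>t. N1 E mu i (w(i:=t)) = N1 E mu i w"
    unfolding N1_def by (intro sum.cong refl arg_cong2[where f="(*)"] prod.cong) auto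
  have c3: "\<And>t. Z_del E mu i (w(i:=t)) = Z_del E mu i w" by (rule Z_del_cong) auto
  have c4: "\<And>t. Z_con E mu i (w(i:=t)) = Z_con E mu i w" by (rule Z_con_cong) auto
  have U: "\<And>t. Um E mu (w(i:=t)) = (N0 E mu i w + t * N1 E mu i w) / (Z_del E mu i w + t * Z_con E mu i w)"
    unfolding Um_eq numU_split[OF fin i] Zm_split[OF fin i] c1 c2 c3 c4 by simp
  have "Z_del E mu i w > 0" using Z_del_pos[OF m(1,2)] w by auto
  moreover have "Z_con E mu i w \<ge> 0" using Z_con_nonneg[OF m(1) i] w by auto
  moreover have "N0 E mu i w * Z_con E mu i w \<le> N1 E mu i w * Z_del E mu i w"
    by (rule si_cross[OF m i w])
  ultimately show ?thesis unfolding U using s by (intro arith_frac_mono) auto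
qed

lemma Um_mono:
  assumes cm: "cavity_monotone E mu" and w: "\<forall>e\<in>E. 0 \<le> w e \<and> w e \<le> w' e"
  shows "Um E mu w \<le> Um E mu w'"
proof -
  have fin: "finite E" using cm unfolding cavity_monotone_def is_measure_def by auto
  define mix where "mix D = (\<lambda>e. if e \<in> D then w' e else w e)" for D
  have nn: "\<forall>e\<in>E. 0 \<le> mix D e" for D using w unfolding mix_def by force
  have "Um E mu w \<le> Um E mu (mix D)" if "D \<subseteq> E" for D
    using finite_subset[OF that fin] that
  proof (induction D rule: finite_induct)
    case empty
    then show ?case by (simp add: mix_def)
  next
    case (insert i D)
    have "Um E mu w \<le> Um E mu (mix D)" using insert by auto
    also have "mix D = (mix D)(i := w i)" using insert by (auto simp: mix_def)
    also have "Um E mu ((mix D)(i := w i)) \<le> Um E mu ((mix D)(i := w' i))"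
      using insert w by (intro Um_mono1[OF cm _ nn]) auto
    also have "(mix D)(i := w' i) = mix (insert i D)" by (auto simp: mix_def)
    finally show ?case .
  qed
  from this[of E] have "Um E mu w \<le> Um E mu (mix E)" by simp
  also have "Um E mu (mix E) = Um E mu w'" by (rule Um_cong) (simp add: mix_def)
  finally show ?thesis .
qed

section \<open>Rayleigh implies antitonicity of the cavity ratio\<close>

definition qA :: "'e set \<Rightarrow> ('e set \<Rightarrow> real) \<Rightarrow> 'e \<Rightarrow> 'e \<Rightarrow> ('e \<Rightarrow> real) \<Rightarrow> real" where
  "qA E mu e f w = (\<Sum>F\<in>Pow (E - {e} - {f}). mu F * (\<Prod>x\<in>F. w x))"
definition qB :: "'e set \<Rightarrow> ('e set \<Rightarrow> real) \<Rightarrow> 'e \<Rightarrow> 'e \<Rightarrow> ('e \<Rightarrow> real) \<Rightarrow> real" where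
  "qB E mu e f w = (\<Sum>F\<in>Pow (E - {e} - {f}). mu (insert e F) * (\<Prod>x\<in>F. w x))"
definition qC :: "'e set \<Rightarrow> ('e set \<Rightarrow> real) \<Rightarrow> 'e \<Rightarrow> 'e \<Rightarrow> ('e \<Rightarrow> real) \<Rightarrow> real" where
  "qC E mu e f w = (\<Sum>F\<in>Pow (E - {e} - {f}). mu (insert f F) * (\<Prod>x\<in>F. w x))"
definition qD :: "'e set \<Rightarrow> ('e set \<Rightarrow> real) \<Rightarrow> 'e \<Rightarrow> 'e \<Rightarrow> ('e \<Rightarrow> real) \<Rightarrow> real" where
  "qD E mu e f w = (\<Sum>F\<in>Pow (E - {e} - {f}). mu (insert e (insert f F)) * (\<Prod>x\<in>F. w x))"

lemma Zdel_ef: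
  assumes "finite E" "e \<in> E" "f \<in> E" "e \<noteq> f"
  shows "Z_del E mu e w = qA E mu e f w + w f * qC E mu e f w"
proof -
  have fe: "finite (E - {e})" "f \<in> E - {e}" using assms by auto
  have "(\<Sum>F\<in>Pow (E - {e} - {f}). mu (insert f F) * (\<Prod>x\<in>insert f F. w x))
      = (\<Sum>F\<in>Pow (E - {e} - {f}). w f * (mu (insert f F) * (\<Prod>x\<in>F. w x)))"
    using fe by (intro sum.cong refl) (auto simp: prod_insert_sub2)
  then show ?thesis unfolding Z_del_def qA_def qC_def sum_pow_remove[OF fe]
    by (simp add: sum_distrib_left)
qed

lemma Zcon_ef:
  assumes "finite E" "e \<in> E" "f \<in> E" "e \<noteq> f"
  shows "Z_con E mu e w = qB E mu e f w + w f * qD E mu e f w"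
proof -
  have fe: "finite (E - {e})" "f \<in> E - {e}" using assms by auto
  have "(\<Sum>F\<in>Pow (E - {e} - {f}). mu (insert e (insert f F)) * (\<Prod>x\<in>insert f F. w x))
      = (\<Sum>F\<in>Pow (E - {e} - {f}). w f * (mu (insert e (insert f F)) * (\<Prod>x\<in>F. w x)))"
    using fe by (intro sum.cong refl) (auto simp: prod_insert_sub2)
  then show ?thesis unfolding Z_con_def qB_def qD_def sum_pow_remove[OF fe]
    by (simp add: sum_distrib_left)
qed

lemma Zcon_fe:
  assumes "finite E" "e \<in> E" "f \<in> E" "e \<noteq> f"
  shows "Z_con E mu f w = qC E mu e f w + w e * qD E mu e f w"
proof -
  have fe: "finite (E - {f})" "e \<in> E - {f}" using assms by auto
  have eqs: "E - {f} - {e} = E - {e} - {f}" by auto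
  have "(\<Sum>F\<in>Pow (E - {e} - {f}). mu (insert f (insert e F)) * (\<Prod>x\<in>insert e F. w x))
      = (\<Sum>F\<in>Pow (E - {e} - {f}). w e * (mu (insert e (insert f F)) * (\<Prod>x\<in>F. w x)))"
    using fe by (intro sum.cong refl) (auto simp: prod_insert_sub3 insert_commute)
  then show ?thesis unfolding Z_con_def qC_def qD_def sum_pow_remove[OF fe] eqs
    by (simp add: sum_distrib_left)
qed

lemma pair_indic_sum:
  assumes "finite E" "e \<in> E" "f \<in> E" "e \<noteq> f"
  shows "(\<Sum>F\<in>Pow E. mu F * (\<Prod>x\<in>F. w x) * (if e \<in> F \<and> f \<in> F then 1 else 0)) = w e * (w f * qD E mu e f w)"
proof -
  have fe: "finite (E - {e})" "f \<in> E - {e}" using assms by auto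
  have s1: "(\<Sum>F\<in>Pow (E - {e}). mu F * (\<Prod>x\<in>F. w x) * (if e \<in> F \<and> f \<in> F then 1 else 0)) = 0"
    by (intro sum.neutral) auto
  have s2: "(\<Sum>F\<in>Pow (E - {e}). mu (insert e F) * (\<Prod>x\<in>insert e F. w x) * (if e \<in> insert e F \<and> f \<in> insert e F then 1 else 0))
      = w e * (\<Sum>F\<in>Pow (E - {e}). mu (insert e F) * (\<Prod>x\<in>F. w x) * (if f \<in> F then 1 else 0))"
    using assms by (simp add: sum_distrib_left prod_insert_sub cong: sum.cong) (intro sum.cong refl, auto simp: prod_insert_sub)
  have s3: "(\<Sum>F\<in>Pow (E - {e}). mu (insert e F) * (\<Prod>x\<in>F. w x) * (if f \<in> F then 1 else 0))
      = w f * qD E mu e f w"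
  proof -
    have a: "(\<Sum>F\<in>Pow (E - {e} - {f}). mu (insert e F) * (\<Prod>x\<in>F. w x) * (if f \<in> F then 1 else 0)) = 0"
      by (intro sum.neutral) auto
    have b: "(\<Sum>F\<in>Pow (E - {e} - {f}). mu (insert e (insert f F)) * (\<Prod>x\<in>insert f F. w x) * (if f \<in> insert f F then 1 else 0))
       = w f * qD E mu e f w"
      unfolding qD_def sum_distrib_left using fe by (intro sum.cong refl) (auto simp: prod_insert_sub2)
    show ?thesis unfolding sum_pow_remove[OF fe] a b by simp
  qed
  show ?thesis unfolding sum_pow_remove[OF assms(1,2)] s1 s2 s3 by simp
qed

lemma arith_ray1:
  fixes a b d p q z :: real
  assumes "z > 0" "a > 0" "b > 0" "a * (b * d) / z \<le> a * p / z * (b * q / z)"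
  shows "d * z \<le> p * q"
proof -
  have "a * (b * d) / z * (z * z) \<le> a * p / z * (b * q / z) * (z * z)"
    using assms by (intro mult_right_mono) auto
  moreover have "a * (b * d) / z * (z * z) = (a * b) * (d * z)" using assms by (simp add: field_simps)
  moreover have "a * p / z * (b * q / z) * (z * z) = (a * b) * (p * q)" using assms by (simp add: field_simps)
  ultimately have "(a * b) * (d * z) \<le> (a * b) * (p * q)" by simp
  then show ?thesis using assms by simp
qed

lemma arith_ray2:
  fixes qa qb qc qd we wf :: real
  assumes "qd * (qa + wf * qc + we * (qb + wf * qd)) \<le> (qb + wf * qd) * (qc + we * qd)"
  shows "qa * qd \<le> qb * qc"
  using assms by (simp add: algebra_simps)

lemma ray_cross_pos:
  assumes "is_measure E mu" "mu {} > 0" "rayleigh E mu" "e \<in> E" "f \<in> E" "e \<noteq> f"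
    and w: "\<forall>x\<in>E. 0 < w x"
  shows "qA E mu e f w * qD E mu e f w \<le> qB E mu e f w * qC E mu e f w"
proof -
  have fin: "finite E" using assms unfolding is_measure_def by auto
  let ?Z = "Zm E mu w"
  have Z: "?Z > 0" using Zm_pos[OF assms(1,2)] w by (simp add: less_imp_le)
  have "Pm E mu w (\<lambda>F. e \<in> F \<and> f \<in> F) \<le> Pm E mu w (\<lambda>F. e \<in> F) * Pm E mu w (\<lambda>F. f \<in> F)"
    using assms unfolding rayleigh_def by blast
  then have "w e * (w f * qD E mu e f w) / ?Z \<le> w e * Z_con E mu e w / ?Z * (w f * Z_con E mu f w / ?Z)"
    unfolding Pm_def Em_def pair_indic_sum[OF fin assms(4-6)] indic_sum[OF fin assms(4)] indic_sum[OF fin assms(5)]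
    by simp
  then have "qD E mu e f w * ?Z \<le> Z_con E mu e w * Z_con E mu f w"
    using Z w assms(4,5) by (intro arith_ray1[of ?Z "w e" "w f"]) auto
  then have "qD E mu e f w * (qA E mu e f w + w f * qC E mu e f w + w e * (qB E mu e f w + w f * qD E mu e f w))
     \<le> (qB E mu e f w + w f * qD E mu e f w) * (qC E mu e f w + w e * qD E mu e f w)"
    by (simp only: Zm_split[OF fin assms(4)] Zdel_ef[OF fin assms(4-6)] Zcon_ef[OF fin assms(4-6)] Zcon_fe[OF fin assms(4-6)])
  then show ?thesis by (rule arith_ray2)
qed

lemma ray_cross:
  assumes "is_measure E mu" "mu {} > 0" "rayleigh E mu" "e \<in> E" "f \<in> E" "e \<noteq> f"
    and w: "\<forall>x\<in>E. 0 \<le> w x"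
  shows "qA E mu e f w * qD E mu e f w \<le> qB E mu e f w * qC E mu e f w"
proof -
  let ?f = "\<lambda>\<epsilon>. qB E mu e f (\<lambda>x. w x + \<epsilon>) * qC E mu e f (\<lambda>x. w x + \<epsilon>) - qA E mu e f (\<lambda>x. w x + \<epsilon>) * qD E mu e f (\<lambda>x. w x + \<epsilon>)"
  have "(?f \<longlongrightarrow> qB E mu e f w * qC E mu e f w - qA E mu e f w * qD E mu e f w) (at_right 0)"
    unfolding qA_def qB_def qC_def qD_def by (auto intro!: tendsto_eq_intros)
  moreover have "0 \<le> ?f \<epsilon>" if "\<epsilon> > 0" for \<epsilon>
  proof -
    have "\<forall>x\<in>E. 0 < w x + \<epsilon>" using w that by (auto intro: add_nonneg_pos)
    from ray_cross_pos[OF assms(1-6) this] show ?thesis by simp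
  qed
  ultimately have "0 \<le> qB E mu e f w * qC E mu e f w - qA E mu e f w * qD E mu e f w"
    by (rule nonneg_limit)
  then show ?thesis by simp
qed

lemma qA_pos:
  assumes "is_measure E mu" "mu {} > 0" "\<forall>x\<in>E. 0 \<le> w x"
  shows "qA E mu e f w > 0"
proof -
  have fin: "finite E" using assms unfolding is_measure_def by auto
  have "0 < mu {} * (\<Prod>e\<in>{}. w e)" using assms by simp
  also have "\<dots> \<le> qA E mu e f w" unfolding qA_def
    by (rule member_le_sum[where f="\<lambda>F. mu F * (\<Prod>e\<in>F. w e)"])
       (use fin assms in \<open>auto intro!: mult_nonneg_nonneg prod_nonneg simp: is_measure_def\<close>)
  finally show ?thesis .
qed

lemma qC_nonneg:
  assumes "is_measure E mu" "f \<in> E" "\<forall>x\<in>E. 0 \<le> w x"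
  shows "qC E mu e f w \<ge> 0"
  unfolding qC_def
proof (rule sum_nonneg)
  fix F assume F: "F \<in> Pow (E - {e} - {f})"
  then have "insert f F \<subseteq> E" using assms by auto
  then have "0 \<le> mu (insert f F)" by (rule measure_nonneg[OF assms(1)])
  moreover have "0 \<le> (\<Prod>x\<in>F. w x)" using F assms by (intro prod_nonneg) auto
  ultimately show "0 \<le> mu (insert f F) * (\<Prod>x\<in>F. w x)" by simp
qed

lemma gamma_anti1:
  assumes cm: "cavity_monotone E mu" and ef: "e \<in> E" "f \<in> E" "e \<noteq> f"
    and w: "\<forall>x\<in>E. 0 \<le> w x" and s: "0 \<le> s" "s \<le> s'"
  shows "cavity_ratio E mu e (w(f:=s')) \<le> cavity_ratio E mu e (w(f:=s))"
proof -
  have m: "is_measure E mu" "mu {} > 0" "rayleigh E mu"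
    using cm unfolding cavity_monotone_def by auto
  have fin: "finite E" using m unfolding is_measure_def by auto
  have c1: "\<And>t. qA E mu e f (w(f:=t)) = qA E mu e f w"
    unfolding qA_def by (intro sum.cong refl arg_cong2[where f="(*)"] prod.cong) auto
  have c2: "\<And>t. qB E mu e f (w(f:=t)) = qB E mu e f w"
    unfolding qB_def by (intro sum.cong refl arg_cong2[where f="(*)"] prod.cong) auto
  have c3: "\<And>t. qC E mu e f (w(f:=t)) = qC E mu e f w"
    unfolding qC_def by (intro sum.cong refl arg_cong2[where f="(*)"] prod.cong) auto
  have c4: "\<And>t. qD E mu e f (w(f:=t)) = qD E mu e f w"
    unfolding qD_def by (intro sum.cong refl arg_cong2[where f="(*)"] prod.cong) auto
  have G: "\<And>t. cavity_ratio E mu e (w(f:=t)) = (qB E mu e f w + t * qD E mu e f w) / (qA E mu e f w + t * qC E mu e f w)"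
    unfolding cavity_ratio_def Zdel_ef[OF fin ef] Zcon_ef[OF fin ef] c1 c2 c3 c4 by simp
  have "qA E mu e f w > 0" by (rule qA_pos[OF m(1,2) w])
  moreover have "qC E mu e f w \<ge> 0" by (rule qC_nonneg[OF m(1) ef(2) w])
  moreover have "qA E mu e f w * qD E mu e f w \<le> qB E mu e f w * qC E mu e f w"
    by (rule ray_cross[OF m ef w])
  ultimately show ?thesis unfolding G using s by (intro arith_frac_anti) (auto simp: mult.commute)
qed

lemma gamma_anti:
  assumes cm: "cavity_monotone E mu" and e: "e \<in> E"
    and w: "\<forall>x\<in>E - {e}. 0 \<le> w x \<and> w x \<le> w' x"
  shows "cavity_ratio E mu e w' \<le> cavity_ratio E mu e w"
proof -
  have fin: "finite E" using cm unfolding cavity_monotone_def is_measure_def by auto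
  define mix where "mix D = (\<lambda>x. if x \<in> D then w' x else if x = e then 0 else w x)" for D
  have nn: "\<forall>x\<in>E. 0 \<le> mix D x" if "D \<subseteq> E - {e}" for D using w that unfolding mix_def by force
  have "cavity_ratio E mu e (mix D) \<le> cavity_ratio E mu e (mix {})" if "D \<subseteq> E - {e}" for D
    using finite_subset[OF that finite_Diff[OF fin]] that
  proof (induction D rule: finite_induct)
    case empty
    then show ?case by simp
  next
    case (insert i D)
    have eq1: "mix (insert i D) = (mix D)(i := w' i)" by (auto simp: mix_def)
    have eq2: "(mix D)(i := w i) = mix D" using insert by (auto simp: mix_def)
    have "cavity_ratio E mu e (mix (insert i D)) \<le> cavity_ratio E mu e ((mix D)(i := w i))"
      unfolding eq1 using insert w by (intro gamma_anti1[OF cm e _ _ nn]) auto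
    also have "\<dots> \<le> cavity_ratio E mu e (mix {})" unfolding eq2 using insert by auto
    finally show ?case .
  qed
  from this[of "E - {e}"] have "cavity_ratio E mu e (mix (E - {e})) \<le> cavity_ratio E mu e (mix {})" by simp
  moreover have "cavity_ratio E mu e (mix (E - {e})) = cavity_ratio E mu e w'"
    by (rule cavity_ratio_cong) (simp add: mix_def)
  moreover have "cavity_ratio E mu e (mix {}) = cavity_ratio E mu e w"
    by (rule cavity_ratio_cong) (simp add: mix_def)
  ultimately show ?thesis by simp
qed



lemma hom_diff: "hom C (\<lambda>S. a * c1 S - b * c2 S) p q = a * hom C c1 p q - b * hom C c2 p q"
  unfolding hom_def by (simp add: algebra_simps sum_subtractf sum_distrib_left)

lemma homw_diff: "homw C (\<lambda>S. a * c1 S - b * c2 S) w = a * homw C c1 w - b * homw C c2 w"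
  unfolding homw_def by (simp add: algebra_simps sum_subtractf sum_distrib_left)

lemma homw_Zm: "homw E mu w = Zm E mu w"
  unfolding homw_def Zm_def ..

lemma homw_numU: "homw E (\<lambda>S. mu S * real (card S)) w = numU E mu w"
  unfolding homw_def numU_def by (simp add: algebra_simps)

lemma homw_Zdel: "homw (E - {e}) mu w = Z_del E mu e w"
  unfolding homw_def Z_del_def ..

lemma homw_Zcon: "homw (E - {e}) (\<lambda>S. mu (insert e S)) w = Z_con E mu e w"
  unfolding homw_def Z_con_def ..

lemma U_hom_upper:
  assumes cm: "cavity_monotone E mu" and x: "\<forall>e\<in>E. 0 \<le> x e"
    and pq: "\<forall>e\<in>E. 0 \<le> p e \<and> 0 \<le> q e \<and> p e \<le> x e * q e"
  shows "hom E (\<lambda>S. mu S * real (card S)) p q \<le> Um E mu x * hom E mu p q"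
proof -
  have m: "is_measure E mu" "mu {} > 0" using cm unfolding cavity_monotone_def by auto
  have fin: "finite E" using m unfolding is_measure_def by auto
  let ?c = "\<lambda>S. Um E mu x * mu S - 1 * (mu S * real (card S))"
  have "0 \<le> hom E ?c p q"
  proof (rule hom_le[OF fin _ pq])
    fix w assume w: "\<forall>e\<in>E. 0 \<le> w e \<and> w e \<le> x e"
    have Z: "Zm E mu w > 0" using Zm_pos[OF m] w by auto
    have "Um E mu w \<le> Um E mu x" using Um_mono[OF cm w] .
    then have "numU E mu w / Zm E mu w \<le> Um E mu x" unfolding Um_eq .
    then have "numU E mu w \<le> Um E mu x * Zm E mu w" using Z by (simp add: divide_simps)
    then show "0 \<le> homw E ?c w" unfolding homw_diff homw_numU homw_Zm by simp
  qed
  then show ?thesis unfolding hom_diff by simp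
qed

lemma U_hom_lower:
  assumes cm: "cavity_monotone E mu" and x: "\<forall>e\<in>E. 0 \<le> x e"
    and pq: "\<forall>e\<in>E. 0 \<le> p e \<and> 0 \<le> q e \<and> x e * q e \<le> p e"
  shows "Um E mu x * hom E mu p q \<le> hom E (\<lambda>S. mu S * real (card S)) p q"
proof -
  have m: "is_measure E mu" "mu {} > 0" using cm unfolding cavity_monotone_def by auto
  have fin: "finite E" using m unfolding is_measure_def by auto
  let ?c = "\<lambda>S. 1 * (mu S * real (card S)) - Um E mu x * mu S"
  have "0 \<le> hom E ?c p q"
  proof (rule hom_ge[OF fin _ pq])
    fix w assume w0: "\<forall>e\<in>E. x e \<le> w e"
    then have w: "\<forall>e\<in>E. 0 \<le> x e \<and> x e \<le> w e" using x by auto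
    have "\<forall>e\<in>E. 0 \<le> w e" using w by (meson order_trans)
    then have Z: "Zm E mu w > 0" using Zm_pos[OF m] by blast
    have "Um E mu x \<le> Um E mu w" using Um_mono[OF cm w] .
    then have "Um E mu x \<le> numU E mu w / Zm E mu w" unfolding Um_eq .
    then have "Um E mu x * Zm E mu w \<le> numU E mu w" using Z by (simp add: divide_simps)
    then show "0 \<le> homw E ?c w" unfolding homw_diff homw_numU homw_Zm by simp
  qed
  then show ?thesis unfolding hom_diff by simp
qed

lemma G_hom_upper:
  assumes cm: "cavity_monotone E mu" and e: "e \<in> E" and x: "\<forall>f\<in>E - {e}. 0 \<le> x f"
    and pq: "\<forall>f\<in>E - {e}. 0 \<le> p f \<and> 0 \<le> q f \<and> x f * q f \<le> p f"
  shows "hom (E - {e}) (\<lambda>S. mu (insert e S)) p q * Z_del E mu e x \<le> hom (E - {e}) mu p q * Z_con E mu e x"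
proof -
  have m: "is_measure E mu" "mu {} > 0" using cm unfolding cavity_monotone_def by auto
  have fin: "finite E" using m unfolding is_measure_def by auto
  let ?c = "\<lambda>S. Z_con E mu e x * mu S - Z_del E mu e x * mu (insert e S)"
  have "0 \<le> hom (E - {e}) ?c p q"
  proof (rule hom_ge[OF _ _ pq])
    show "finite (E - {e})" using fin by simp
    fix w assume w0: "\<forall>f\<in>E - {e}. x f \<le> w f"
    then have w: "\<forall>f\<in>E - {e}. 0 \<le> x f \<and> x f \<le> w f" using x by auto
    have "\<forall>f\<in>E - {e}. 0 \<le> w f" using w by (meson order_trans)
    then have Zw: "Z_del E mu e w > 0" using Z_del_pos[OF m] by blast
    have Zx: "Z_del E mu e x > 0" using Z_del_pos[OF m] x by blast
    have "cavity_ratio E mu e w \<le> cavity_ratio E mu e x" using gamma_anti[OF cm e w] .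
    then have "Z_con E mu e w / Z_del E mu e w \<le> Z_con E mu e x / Z_del E mu e x"
      unfolding cavity_ratio_def .
    then have "Z_con E mu e w * Z_del E mu e x \<le> Z_con E mu e x * Z_del E mu e w"
      using Zw Zx by (simp add: divide_simps)
    then show "0 \<le> homw (E - {e}) ?c w" unfolding homw_diff homw_Zcon homw_Zdel
      by (simp add: mult.commute)
  qed
  then show ?thesis unfolding hom_diff by (simp add: mult.commute)
qed

lemma G_hom_lower:
  assumes cm: "cavity_monotone E mu" and e: "e \<in> E" and x: "\<forall>f\<in>E - {e}. 0 \<le> x f"
    and pq: "\<forall>f\<in>E - {e}. 0 \<le> p f \<and> 0 \<le> q f \<and> p f \<le> x f * q f"
  shows "hom (E - {e}) mu p q * Z_con E mu e x \<le> hom (E - {e}) (\<lambda>S. mu (insert e S)) p q * Z_del E mu e x"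
proof -
  have m: "is_measure E mu" "mu {} > 0" using cm unfolding cavity_monotone_def by auto
  have fin: "finite E" using m unfolding is_measure_def by auto
  let ?c = "\<lambda>S. Z_del E mu e x * mu (insert e S) - Z_con E mu e x * mu S"
  have "0 \<le> hom (E - {e}) ?c p q"
  proof (rule hom_le[OF _ _ pq])
    show "finite (E - {e})" using fin by simp
    fix w assume w: "\<forall>f\<in>E - {e}. 0 \<le> w f \<and> w f \<le> x f"
    have Zw: "Z_del E mu e w > 0" using Z_del_pos[OF m] w by blast
    have Zx: "Z_del E mu e x > 0" using Z_del_pos[OF m] x by blast
    have "cavity_ratio E mu e x \<le> cavity_ratio E mu e w" using gamma_anti[OF cm e w] .
    then have "Z_con E mu e x / Z_del E mu e x \<le> Z_con E mu e w / Z_del E mu e w"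
      unfolding cavity_ratio_def .
    then have "Z_con E mu e x * Z_del E mu e w \<le> Z_con E mu e w * Z_del E mu e x"
      using Zw Zx by (simp add: divide_simps)
    then show "0 \<le> homw (E - {e}) ?c w" unfolding homw_diff homw_Zcon homw_Zdel
      by (simp add: mult.commute)
  qed
  then show ?thesis unfolding hom_diff by (simp add: mult.commute)
qed



lemma cyclic_from_successively:
  assumes "cs \<noteq> []" "successively A cs" "A (last cs) (hd cs)"
  shows "\<forall>i<length cs. A (cs ! i) (cs ! ((i + 1) mod length cs))"
proof (intro allI impI)
  fix i assume i: "i < length cs"
  show "A (cs ! i) (cs ! ((i + 1) mod length cs))"
  proof (cases "Suc i < length cs")
    case True
    then show ?thesis using successively_nth[OF assms(2) True] by simp
  next
    case False
    then have "i = length cs - 1" using i by simp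
    moreover have "i + 1 = length cs" using False i by simp
    then have "(i + 1) mod length cs = 0" by simp
    ultimately show ?thesis using assms(1,3) by (simp add: last_conv_nth hd_conv_nth)
  qed
qed

lemma successively_map_upt:
  assumes "\<And>j. Suc j < k \<Longrightarrow> P (f j) (f (Suc j))"
  shows "successively P (map f [0..<k])"
  unfolding successively_conv_nth using assms by simp

locale net =
  fixes V :: "'v set" and adj :: "'v \<Rightarrow> 'v \<Rightarrow> bool" and mu :: "'v \<Rightarrow> 'v set set \<Rightarrow> real"
    and r :: 'v and n :: nat and t :: real
  assumes finV: "finite V" and sg: "simple_graph V adj" and rV: "r \<in> V"
    and cmn: "cavity_monotone_network V adj mu"
    and tree: "ball_is_tree V adj r n" and tpos: "t > 0"
begin

lemma adj_sym: "adj u v \<Longrightarrow> adj v u" using sg unfolding simple_graph_def by blast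
lemma adj_irrefl: "adj u v \<Longrightarrow> u \<noteq> v" using sg unfolding simple_graph_def by blast
lemma adj_V: "adj u v \<Longrightarrow> u \<in> V \<and> v \<in> V" using sg unfolding simple_graph_def by blast

definition reach :: "'v \<Rightarrow> bool" where "reach v \<longleftrightarrow> (\<exists>m. (adj ^^ m) r v)"
definition dist :: "'v \<Rightarrow> nat" where "dist v = (LEAST m. (adj ^^ m) r v)"
definition BB :: "'v set" where "BB = ball_vertices V adj r n"
definition par :: "'v \<Rightarrow> 'v" where "par v = (SOME u. adj u v \<and> reach u \<and> Suc (dist u) = dist v)"

lemma relpow_V: "(adj ^^ m) r v \<Longrightarrow> v \<in> V"
  by (cases m) (use rV in \<open>auto dest: adj_V\<close>)

lemma dist_le: "(adj ^^ m) r v \<Longrightarrow> dist v \<le> m"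
  unfolding dist_def by (rule Least_le)

lemma dist_wit: "reach v \<Longrightarrow> (adj ^^ dist v) r v"
  unfolding dist_def reach_def by (rule LeastI_ex)

lemma reach_r: "reach r" unfolding reach_def by (rule exI[of _ 0]) simp

lemma dist_r: "dist r = 0"
  using dist_le[of 0 r] by simp

lemma dist0: "reach v \<Longrightarrow> dist v = 0 \<Longrightarrow> v = r"
  using dist_wit[of v] by simp

lemma reach_V: "reach v \<Longrightarrow> v \<in> V"
  unfolding reach_def using relpow_V by blast

lemma adj_reach: "reach u \<Longrightarrow> adj u v \<Longrightarrow> reach v \<and> dist v \<le> Suc (dist u)"
proof -
  assume u: "reach u" and a: "adj u v"
  have "(adj ^^ Suc (dist u)) r v" using dist_wit[OF u] a by (rule relpowp_Suc_I)
  then show ?thesis unfolding reach_def using dist_le by blast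
qed

lemma adj_dist: "reach u \<Longrightarrow> adj u v \<Longrightarrow> dist v \<le> Suc (dist u) \<and> dist u \<le> Suc (dist v)"
  using adj_reach adj_sym by blast

lemma par_ex: "reach v \<Longrightarrow> dist v > 0 \<Longrightarrow> \<exists>u. adj u v \<and> reach u \<and> Suc (dist u) = dist v"
proof -
  assume v: "reach v" and d: "dist v > 0"
  then obtain k where k: "dist v = Suc k" by (cases "dist v") auto
  have "(adj ^^ Suc k) r v" using dist_wit[OF v] k by simp
  then obtain u where u: "(adj ^^ k) r u" "adj u v" by (rule relpowp_Suc_E)
  have ru: "reach u" using u unfolding reach_def by blast
  have "dist u \<le> k" using dist_le[OF u(1)] .
  moreover have "dist v \<le> Suc (dist u)" using adj_reach[OF ru u(2)] by simp
  ultimately have "Suc (dist u) = dist v" using k by simp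
  then show ?thesis using u ru by blast
qed

lemma par: "reach v \<Longrightarrow> dist v > 0 \<Longrightarrow> adj (par v) v \<and> reach (par v) \<and> Suc (dist (par v)) = dist v"
  unfolding par_def by (rule someI_ex) (rule par_ex)

lemma BB_iff: "v \<in> BB \<longleftrightarrow> reach v \<and> dist v \<le> n"
proof
  assume "v \<in> BB"
  then obtain m where "m \<le> n" "(adj ^^ m) r v" unfolding BB_def ball_vertices_def by blast
  then show "reach v \<and> dist v \<le> n" unfolding reach_def using dist_le by fastforce
next
  assume "reach v \<and> dist v \<le> n"
  then show "v \<in> BB" unfolding BB_def ball_vertices_def using dist_wit reach_V by blast
qed

lemma r_BB: "r \<in> BB" using BB_iff reach_r dist_r by simp

lemma par_BB: "v \<in> BB \<Longrightarrow> dist v > 0 \<Longrightarrow> par v \<in> BB \<and> adj (par v) v \<and> Suc (dist (par v)) = dist v"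
  using par BB_iff by fastforce

definition anc :: "nat \<Rightarrow> 'v \<Rightarrow> 'v" where "anc j v = (par ^^ j) v"

lemma anc_props: "v \<in> BB \<Longrightarrow> j \<le> dist v \<Longrightarrow> anc j v \<in> BB \<and> dist (anc j v) = dist v - j"
proof (induction j)
  case 0
  then show ?case by (simp add: anc_def)
next
  case (Suc j)
  then have h: "anc j v \<in> BB" "dist (anc j v) = dist v - j" by auto
  have "dist (anc j v) > 0" using h Suc by simp
  then have "par (anc j v) \<in> BB" "Suc (dist (par (anc j v))) = dist (anc j v)"
    using par_BB[OF h(1)] by auto
  then show ?case using h by (simp add: anc_def)
qed

lemma anc_adj: "v \<in> BB \<Longrightarrow> j < dist v \<Longrightarrow> adj (anc (Suc j) v) (anc j v)"
proof -
  assume v: "v \<in> BB" and j: "j < dist v"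
  have h: "anc j v \<in> BB" "dist (anc j v) = dist v - j" using anc_props[OF v] j by auto
  then have "dist (anc j v) > 0" using j by simp
  then show ?thesis using par_BB[OF h(1)] by (simp add: anc_def)
qed

lemma anc_top: "v \<in> BB \<Longrightarrow> anc (dist v) v = r"
  using anc_props[of v "dist v"] dist0 BB_iff by auto

abbreviation AA :: "'v \<Rightarrow> 'v \<Rightarrow> bool" where "AA \<equiv> induced adj BB"

lemma no_cycle: "\<not> has_cycle BB AA"
  using tree unfolding ball_is_tree_def is_tree_def BB_def by simp

lemma cycle_lemma:
  assumes u: "u \<in> BB" and w: "w \<in> BB" and uw: "u \<noteq> w" and d: "dist u = dist w"
    and ys: "distinct ys" "set ys \<subseteq> BB" "\<forall>y\<in>set ys. dist y > dist u"
    and ch: "successively AA (w # ys @ [u])"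
  shows False
proof -
  let ?P = "\<lambda>j. anc j u = anc j w"
  have ex: "?P (dist u)" using anc_top[OF u] anc_top[OF w] d by simp
  define J where "J = (LEAST j. ?P j)"
  have PJ: "?P J" unfolding J_def using ex by (rule LeastI)
  have Jle: "J \<le> dist u" unfolding J_def using ex by (rule Least_le)
  have Jmin: "\<And>j. j < J \<Longrightarrow> \<not> ?P j" unfolding J_def using not_less_Least by blast
  have J0: "J > 0" using PJ uw by (cases J) (auto simp: anc_def)
  define xs1 where "xs1 = map (\<lambda>j. anc j u) [0..<Suc J]"
  define xs2 where "xs2 = rev (map (\<lambda>j. anc j w) [0..<J])"
  define cs where "cs = xs1 @ xs2 @ ys"
  have AAsym: "\<And>a b. AA a b \<Longrightarrow> AA b a" unfolding induced_def using adj_sym by blast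
  have ancu: "\<And>j. j \<le> J \<Longrightarrow> anc j u \<in> BB \<and> dist (anc j u) = dist u - j"
    using anc_props[OF u] Jle by auto
  have ancw: "\<And>j. j \<le> J \<Longrightarrow> anc j w \<in> BB \<and> dist (anc j w) = dist u - j"
    using anc_props[OF w] Jle d by auto
  have s1: "successively AA xs1" unfolding xs1_def
  proof (rule successively_map_upt)
    fix j assume "Suc j < Suc J"
    then have "adj (anc (Suc j) u) (anc j u)" "anc j u \<in> BB" "anc (Suc j) u \<in> BB"
      using anc_adj[OF u] ancu Jle by auto
    then show "AA (anc j u) (anc (Suc j) u)" unfolding induced_def using adj_sym by blast
  qed
  have s2: "successively AA xs2" unfolding xs2_def successively_rev
  proof (rule successively_map_upt)
    fix j assume "Suc j < J"
    then have "adj (anc (Suc j) w) (anc j w)" "anc j w \<in> BB" "anc (Suc j) w \<in> BB"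
      using anc_adj[OF w] ancw Jle d by auto
    then show "AA (anc (Suc j) w) (anc j w)" unfolding induced_def by blast
  qed
  have a0: "\<And>v. anc 0 v = v" by (simp add: anc_def)
  have xs1_ne: "xs1 \<noteq> []" "last xs1 = anc J u" "hd xs1 = u"
  proof -
    show "xs1 \<noteq> []" unfolding xs1_def by simp
    show "last xs1 = anc J u" unfolding xs1_def by (simp del: upt_Suc add: last_map)
    have "[0..<Suc J] = 0 # [Suc 0..<Suc J]" by (rule upt_conv_Cons) simp
    then show "hd xs1 = u" unfolding xs1_def using a0 by simp
  qed
  have xs2_ne: "xs2 \<noteq> []" "hd xs2 = anc (J - 1) w" "last xs2 = w"
  proof -
    show "xs2 \<noteq> []" unfolding xs2_def using J0 by simp
    have l: "last [0..<J] = J - 1" using J0 by (simp add: last_upt)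
    show "hd xs2 = anc (J - 1) w" unfolding xs2_def using J0 by (simp add: hd_rev last_map l)
    have "[0..<J] = 0 # [Suc 0..<J]" using J0 by (rule upt_conv_Cons)
    then show "last xs2 = w" unfolding xs2_def using a0 by (simp add: last_rev)
  qed
  have j12: "AA (last xs1) (hd xs2)"
  proof -
    have "J - 1 < dist w" using J0 Jle d by simp
    from anc_adj[OF w this] have "adj (anc (Suc (J - 1)) w) (anc (J - 1) w)" .
    then have "adj (anc J u) (anc (J - 1) w)" using J0 PJ by simp
    moreover have "anc J u \<in> BB" "anc (J - 1) w \<in> BB" using ancu ancw by auto
    ultimately show ?thesis using xs1_ne xs2_ne unfolding induced_def by simp
  qed
  have chain_w: "ys \<noteq> [] \<Longrightarrow> AA w (hd ys) \<and> successively AA ys \<and> AA (last ys) u"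
  proof -
    assume ne: "ys \<noteq> []"
    have "successively AA ((w # ys) @ [u])" using ch by simp
    then have c: "successively AA (w # ys)" "AA (last (w # ys)) u"
      unfolding successively_append_iff by auto
    then show ?thesis using ne by (cases ys) auto
  qed
  have chain_e: "ys = [] \<Longrightarrow> AA w u" using ch by simp
  have succ: "successively AA cs"
    unfolding cs_def using s1 s2 j12 chain_w xs1_ne xs2_ne
    by (cases "ys = []") (auto simp: successively_append_iff)
  have wrap: "AA (last cs) (hd cs)"
    unfolding cs_def using xs1_ne xs2_ne chain_w chain_e by (cases "ys = []") auto
  have len: "length cs \<ge> 3" unfolding cs_def xs1_def xs2_def using J0 by simp
  have dist_cs: "distinct cs"
  proof -
    have d1: "distinct xs1" unfolding xs1_def
    proof (rule distinct_map[THEN iffD2], intro conjI inj_onI)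
      fix a b assume "a \<in> set [0..<Suc J]" "b \<in> set [0..<Suc J]" "anc a u = anc b u"
      then have ab: "a \<le> J" "b \<le> J" "anc a u = anc b u" by auto
      then have "dist u - a = dist u - b" using ancu[of a] ancu[of b] by auto
      then show "a = b" using ab Jle by linarith
    qed simp
    have d2: "distinct xs2" unfolding xs2_def distinct_rev
    proof (rule distinct_map[THEN iffD2], intro conjI inj_onI)
      fix a b assume "a \<in> set [0..<J]" "b \<in> set [0..<J]" "anc a w = anc b w"
      then have ab: "a \<le> J" "b \<le> J" "anc a w = anc b w" by auto
      then have "dist u - a = dist u - b" using ancw[of a] ancw[of b] by auto
      then show "a = b" using ab Jle by linarith
    qed simp
    have d12: "set xs1 \<inter> set xs2 = {}"
    proof (rule ccontr)
      assume "set xs1 \<inter> set xs2 \<noteq> {}"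
      then obtain z where z: "z \<in> set xs1" "z \<in> set xs2" by blast
      from z(1) obtain a where a0: "a < Suc J" "z = anc a u" unfolding xs1_def set_map set_upt by auto
      then have a: "a \<le> J" "z = anc a u" by auto
      from z(2) obtain b where b: "b < J" "z = anc b w" unfolding xs2_def by auto
      have ab: "a \<le> J" "b < J" "anc a u = anc b w" using a b by auto
      then have "dist u - a = dist u - b" using ancu[of a] ancw[of b] by auto
      then have "a = b" using ab Jle by simp
      then show False using ab Jmin by auto
    qed
    have d3: "set (xs1 @ xs2) \<inter> set ys = {}"
    proof -
      have "\<forall>z\<in>set (xs1 @ xs2). dist z \<le> dist u" unfolding xs1_def xs2_def
        using ancu ancw by auto
      then show ?thesis using ys(3) by fastforce
    qed
    show ?thesis unfolding cs_def using d1 d2 d12 d3 ys(1) by auto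
  qed
  have setcs: "set cs \<subseteq> BB" unfolding cs_def xs1_def xs2_def using ancu ancw ys(2) by auto
  have "has_cycle BB AA"
    unfolding has_cycle_def
  proof (intro exI[of _ cs] conjI)
    have "cs \<noteq> []" using len by auto
    then show "\<forall>i<length cs. AA (cs ! i) (cs ! ((i + 1) mod length cs))"
      by (rule cyclic_from_successively[OF _ succ wrap])
  qed (use len dist_cs setcs in auto)
  then show False using no_cycle by simp
qed

lemma no_same_level: "u \<in> BB \<Longrightarrow> w \<in> BB \<Longrightarrow> adj u w \<Longrightarrow> dist u \<noteq> dist w"
proof
  assume a: "u \<in> BB" "w \<in> BB" "adj u w" "dist u = dist w"
  have ne: "w \<noteq> u" using adj_irrefl[OF a(3)] by simp
  have s: "successively AA (u # [] @ [w])" using a by (simp add: induced_def)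
  show False
    by (rule cycle_lemma[OF a(2,1) ne _ _ _ _ s]) (use a in auto)
qed

lemma unique_par:
  assumes v: "v \<in> BB" and u: "u \<in> BB" "adj u v" "Suc (dist u) = dist v"
  shows "u = par v"
proof (rule ccontr)
  assume ne: "u \<noteq> par v"
  have p: "par v \<in> BB" "adj (par v) v" "Suc (dist (par v)) = dist v" using par_BB[OF v] u by auto
  have s: "successively AA (par v # [v] @ [u])" using p u v adj_sym by (simp add: induced_def)
  have d: "dist u = dist (par v)" using p u by simp
  show False
  proof (rule cycle_lemma[OF u(1) p(1) ne d _ _ _ s])
    show "distinct [v]" by simp
    show "set [v] \<subseteq> BB" using v by simp
    show "\<forall>y\<in>set [v]. dist u < dist y" using u(3) by simp
  qed
qed

lemma nbr_cases:
  assumes v: "v \<in> BB" and u: "u \<in> BB" "adj v u"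
  shows "(dist v > 0 \<and> u = par v) \<or> dist u = Suc (dist v)"
proof -
  have rv: "reach v" and ru: "reach u" using v u BB_iff by auto
  have d1: "dist u \<le> Suc (dist v)" using adj_reach[OF rv u(2)] by simp
  have d2: "dist v \<le> Suc (dist u)" using adj_reach[OF ru adj_sym[OF u(2)]] by simp
  have d3: "dist u \<noteq> dist v" using no_same_level[OF u(1) v adj_sym[OF u(2)]] .
  show ?thesis
  proof (cases "dist u = Suc (dist v)")
    case False
    then have "Suc (dist u) = dist v" using d1 d2 d3 by linarith
    then have "u = par v" using unique_par[OF v u(1) adj_sym[OF u(2)]] by simp
    then show ?thesis using \<open>Suc (dist u) = dist v\<close> by auto
  qed simp
qed

end



context net
begin

abbreviation Ed where "Ed \<equiv> edges adj"
abbreviation Einc where "Einc v \<equiv> inc_edges adj v"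

lemma other_eq: "u \<noteq> v \<Longrightarrow> other v {v, u} = u"
  unfolding other_def by (rule the_equality) (auto simp: doubleton_eq_iff)

lemma other_eq2: "u \<noteq> v \<Longrightarrow> other v {u, v} = u"
  using other_eq by (simp add: insert_commute)

lemma Einc_iff: "e \<in> Einc v \<longleftrightarrow> (\<exists>u. adj v u \<and> e = {v, u})"
  unfolding inc_edges_def edges_def using adj_sym by (auto simp: insert_commute)

lemma Ed_sub: "Ed \<subseteq> Pow V"
  unfolding edges_def using adj_V by auto

lemma fin_Ed: "finite Ed" using finite_subset[OF Ed_sub] finV by auto

lemma fin_Einc: "finite (Einc v)"
  unfolding inc_edges_def using fin_Ed by auto

lemma Einc_Ed: "Einc v \<subseteq> Ed" unfolding inc_edges_def by auto

lemma cm_v: "v \<in> V \<Longrightarrow> cavity_monotone (Einc v) (mu v)"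
  using cmn unfolding cavity_monotone_network_def by auto

lemma meas_v: "v \<in> V \<Longrightarrow> is_measure (Einc v) (mu v)"
  using cm_v unfolding cavity_monotone_def by auto

lemma mu_empty_pos: "v \<in> V \<Longrightarrow> mu v {} > 0"
  using cm_v unfolding cavity_monotone_def by auto

definition TT :: "'v set set" where "TT = {e \<in> Ed. e \<subseteq> BB}"
definition OE :: "'v set set" where "OE = Ed - TT"
definition Lev :: "nat \<Rightarrow> 'v set" where "Lev L = {v \<in> BB. dist v = L}"
definition TL :: "nat \<Rightarrow> 'v set set" where "TL L = {e \<in> TT. \<forall>v\<in>e. dist v \<le> L}"
definition ch :: "'v \<Rightarrow> 'v set" where "ch a = {c \<in> BB. adj a c \<and> dist c = Suc (dist a)}"
definition CE :: "'v \<Rightarrow> 'v set set" where "CE a = (\<lambda>c. {a, c}) ` ch a"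
definition pe :: "'v \<Rightarrow> 'v set" where "pe v = {par v, v}"

lemma BB_V: "BB \<subseteq> V" unfolding BB_def ball_vertices_def by auto

lemma fin_BB: "finite BB" using finite_subset[OF BB_V finV] .

lemma fin_TT: "finite TT" unfolding TT_def using fin_Ed by auto

lemma fin_ch: "finite (ch a)" unfolding ch_def using fin_BB by auto

lemma fin_CE: "finite (CE a)" unfolding CE_def using fin_ch by auto

lemma fin_Lev: "finite (Lev L)" unfolding Lev_def using fin_BB by auto

lemma fin_TL: "finite (TL L)" unfolding TL_def using fin_TT by auto

lemma ch_par: "c \<in> ch a \<Longrightarrow> a \<in> BB \<Longrightarrow> par c = a"
  unfolding ch_def using unique_par adj_sym by (metis (mono_tags, lifting) mem_Collect_eq)

lemma par_ch: "c \<in> BB \<Longrightarrow> dist c > 0 \<Longrightarrow> c \<in> ch (par c)"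
  unfolding ch_def using par_BB by auto

lemma CE_sub_Einc: "CE a \<subseteq> Einc a"
  unfolding CE_def ch_def using Einc_iff by auto

lemma pe_Einc: "v \<in> BB \<Longrightarrow> dist v > 0 \<Longrightarrow> pe v \<in> Einc v"
proof -
  assume v: "v \<in> BB" "dist v > 0"
  then have "adj v (par v)" using par_BB adj_sym by blast
  moreover have "pe v = {v, par v}" unfolding pe_def by (simp add: insert_commute)
  ultimately show ?thesis using Einc_iff by blast
qed

lemma CE_TT: "a \<in> BB \<Longrightarrow> CE a \<subseteq> TT"
  unfolding CE_def TT_def ch_def edges_def by auto

lemma pe_TT: "v \<in> BB \<Longrightarrow> dist v > 0 \<Longrightarrow> pe v \<in> TT"
  unfolding pe_def TT_def edges_def using par_BB by auto

lemma pe_notin_CE: "v \<in> BB \<Longrightarrow> dist v > 0 \<Longrightarrow> pe v \<notin> CE v"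
proof
  assume v: "v \<in> BB" "dist v > 0" and "pe v \<in> CE v"
  then obtain c where c: "c \<in> ch v" "{par v, v} = {v, c}" unfolding CE_def pe_def by auto
  have "c \<noteq> v" using c(1) unfolding ch_def by auto
  then have "par v = c" using c(2) by (auto simp: doubleton_eq_iff)
  then show False using c(1) par_BB[OF v] unfolding ch_def by auto
qed

lemma other_CE: "e \<in> CE a \<Longrightarrow> other a e \<in> ch a \<and> e = {a, other a e}"
proof -
  assume "e \<in> CE a"
  then obtain c where c: "c \<in> ch a" "e = {a, c}" unfolding CE_def by auto
  have "c \<noteq> a" using c(1) unfolding ch_def by auto
  then show ?thesis using c other_eq[of c a] by auto
qed

lemma Einc_TT: "v \<in> BB \<Longrightarrow> Einc v \<inter> TT = (if dist v > 0 then {pe v} else {}) \<union> CE v"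
proof (intro equalityI subsetI)
  fix e assume v: "v \<in> BB" and e: "e \<in> Einc v \<inter> TT"
  then obtain u where u: "adj v u" "e = {v, u}" using Einc_iff by auto
  have uB: "u \<in> BB" using e u unfolding TT_def by auto
  from nbr_cases[OF v uB u(1)]
  show "e \<in> (if dist v > 0 then {pe v} else {}) \<union> CE v"
  proof
    assume "dist v > 0 \<and> u = par v"
    then show ?thesis using u by (auto simp: pe_def insert_commute)
  next
    assume "dist u = Suc (dist v)"
    then have "u \<in> ch v" using uB u unfolding ch_def by auto
    then show ?thesis using u unfolding CE_def by auto
  qed
next
  fix e assume v: "v \<in> BB" and e: "e \<in> (if dist v > 0 then {pe v} else {}) \<union> CE v"
  then show "e \<in> Einc v \<inter> TT"
    using pe_Einc[OF v] pe_TT[OF v] CE_sub_Einc[of v] CE_TT[OF v] by (auto split: if_splits)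
qed

lemma Einc_sub_TT: "v \<in> BB \<Longrightarrow> dist v < n \<Longrightarrow> Einc v \<subseteq> TT"
proof
  fix e assume v: "v \<in> BB" "dist v < n" and e: "e \<in> Einc v"
  then obtain u where u: "adj v u" "e = {v, u}" using Einc_iff by auto
  have "reach u \<and> dist u \<le> Suc (dist v)" using adj_reach v u BB_iff by blast
  then have "u \<in> BB" using v BB_iff by auto
  then show "e \<in> TT" using u v Einc_Ed e unfolding TT_def by auto
qed

lemma Einc_inner: "v \<in> BB \<Longrightarrow> dist v < n \<Longrightarrow> Einc v = (if dist v > 0 then {pe v} else {}) \<union> CE v"
  using Einc_TT Einc_sub_TT by blast

lemma Einc_outside: "v \<notin> BB \<Longrightarrow> Einc v \<inter> TT = {}"
  unfolding TT_def inc_edges_def by auto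

lemma CE_disj: "a \<in> BB \<Longrightarrow> a' \<in> BB \<Longrightarrow> a \<noteq> a' \<Longrightarrow> CE a \<inter> CE a' = {}"
proof (rule ccontr)
  assume a: "a \<in> BB" "a' \<in> BB" "a \<noteq> a'" and "CE a \<inter> CE a' \<noteq> {}"
  then obtain c c' where c: "c \<in> ch a" "c' \<in> ch a'" "{a, c} = {a', c'}" unfolding CE_def by auto
  then have "a = c' \<and> c = a'" using a(3) by (auto simp: doubleton_eq_iff)
  then show False using c unfolding ch_def by auto
qed

lemma TL_Suc: "L \<ge> 1 \<Longrightarrow> TL (Suc L) = TL L \<union> (\<Union>a\<in>Lev L. CE a)"
proof (intro equalityI subsetI)
  fix e assume L: "L \<ge> 1" and e: "e \<in> TL (Suc L)"
  then have eT: "e \<in> TT" and ed: "\<forall>v\<in>e. dist v \<le> Suc L" unfolding TL_def by auto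
  then obtain a u where au: "adj a u" "e = {a, u}" unfolding TT_def edges_def by auto
  have aB: "a \<in> BB" "u \<in> BB" using eT au unfolding TT_def by auto
  show "e \<in> TL L \<union> (\<Union>a\<in>Lev L. CE a)"
  proof (cases "\<forall>v\<in>e. dist v \<le> L")
    case True
    then show ?thesis using eT unfolding TL_def by auto
  next
    case False
    then obtain v where v0: "v \<in> e" "dist v = Suc L" using ed by (meson le_SucE)
    obtain w where vw: "e = {v, w}" "dist v = Suc L" "adj w v" "v \<in> BB" "w \<in> BB"
    proof (cases "v = a")
      case True
      then show ?thesis using that[of u] au aB v0 adj_sym by auto
    next
      case False
      then have "v = u" using v0 au by auto
      then show ?thesis using that[of a] au aB v0 by (auto simp: insert_commute)
    qed
    have "dist w \<le> Suc L" using ed vw by auto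
    from nbr_cases[OF vw(4) vw(5) adj_sym[OF vw(3)]]
    have "w = par v"
    proof
      assume "dist w = Suc (dist v)"
      then show ?thesis using \<open>dist w \<le> Suc L\<close> vw by simp
    qed auto
    then have "dist w = L" "v \<in> ch w" using par_BB[OF vw(4)] vw adj_sym unfolding ch_def by auto
    then have "e \<in> CE w" "w \<in> Lev L" unfolding CE_def Lev_def using vw by (auto simp: insert_commute)
    then show ?thesis by auto
  qed
next
  fix e assume L: "L \<ge> 1" and e: "e \<in> TL L \<union> (\<Union>a\<in>Lev L. CE a)"
  from e consider "e \<in> TL L" | "e \<in> (\<Union>a\<in>Lev L. CE a)" by blast
  then show "e \<in> TL (Suc L)"
  proof cases
    case 1 then show ?thesis unfolding TL_def by auto
  next
    case 2
    then obtain a c where ac: "a \<in> Lev L" "c \<in> ch a" "e = {a, c}" unfolding CE_def by auto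
    then have "e \<in> TT" using CE_TT[of a] unfolding CE_def Lev_def by auto
    then show ?thesis using ac unfolding TL_def Lev_def ch_def by auto
  qed
qed

lemma TL_disj: "TL L \<inter> (\<Union>a\<in>Lev L. CE a) = {}"
  unfolding TL_def Lev_def CE_def ch_def by auto

lemma TL_top: "TL (Suc n) = TT"
  unfolding TL_def TT_def using BB_iff by auto

lemma TL_1: "1 \<le> n \<Longrightarrow> TL 1 = Einc r"
proof -
  assume n: "1 \<le> n"
  have "TL 1 = TL 0 \<union> (\<Union>a\<in>Lev 0. CE a)"
  proof (intro equalityI subsetI)
    fix e assume e: "e \<in> TL 1"
    then obtain a u where au: "adj a u" "e = {a, u}" "a \<in> BB" "u \<in> BB" "dist a \<le> 1" "dist u \<le> 1"
      unfolding TL_def TT_def edges_def by auto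
    have "dist a \<noteq> dist u" using no_same_level au by auto
    then have "(dist a = 0 \<and> dist u = 1) \<or> (dist u = 0 \<and> dist a = 1)" using au by auto
    then show "e \<in> TL 0 \<union> (\<Union>a\<in>Lev 0. CE a)"
    proof
      assume h: "dist a = 0 \<and> dist u = 1"
      then have "u \<in> ch a" "a \<in> Lev 0" using au unfolding ch_def Lev_def by auto
      then show ?thesis using au unfolding CE_def by auto
    next
      assume h: "dist u = 0 \<and> dist a = 1"
      then have "a \<in> ch u" "u \<in> Lev 0" using au adj_sym unfolding ch_def Lev_def by auto
      then show ?thesis using au unfolding CE_def by (auto simp: insert_commute)
    qed
  next
    fix e assume "e \<in> TL 0 \<union> (\<Union>a\<in>Lev 0. CE a)"
    then consider "e \<in> TL 0" | "e \<in> (\<Union>a\<in>Lev 0. CE a)" by blast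
    then show "e \<in> TL 1"
    proof cases
      case 1 then show ?thesis unfolding TL_def by auto
    next
      case 2
      then obtain a c where ac: "a \<in> Lev 0" "c \<in> ch a" "e = {a, c}" unfolding CE_def by auto
      then have "e \<in> TT" using CE_TT[of a] unfolding CE_def Lev_def by auto
      then show ?thesis using ac unfolding TL_def Lev_def ch_def by auto
    qed
  qed
  moreover have "TL 0 = {}"
  proof -
    have "e = {}" if e0: "e \<in> TL 0" for e
    proof -
      obtain a u where au: "adj a u" "e = {a, u}"
        using e0 unfolding TL_def TT_def edges_def by blast
      then have "a \<in> BB" "u \<in> BB" "dist a = 0" "dist u = 0" using e0 unfolding TL_def TT_def by auto
      then show ?thesis using no_same_level[of a u] au by auto
    qed
    moreover have "{} \<notin> TL 0" unfolding TL_def TT_def edges_def by auto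
    ultimately show ?thesis by auto
  qed
  moreover have "Lev 0 = {r}" unfolding Lev_def using r_BB dist_r dist0 BB_iff by auto
  moreover have "CE r = Einc r" using Einc_inner[OF r_BB] n dist_r by simp
  ultimately show ?thesis by simp
qed

end



lemma hom_cong:
  assumes "\<And>e. e \<in> C \<Longrightarrow> p e = p' e" "\<And>e. e \<in> C \<Longrightarrow> q e = q' e"
  shows "hom C c p q = hom C c p' q'"
  unfolding hom_def using assms
  by (intro sum.cong refl arg_cong2[where f="(*)"] prod.cong) auto

lemma prod_if_split:
  assumes "finite A"
  shows "(\<Prod>x\<in>A. if x \<in> R then f x else g x) = (\<Prod>x\<in>R \<inter> A. f x) * (\<Prod>x\<in>A - R. g x)"
proof -
  have "(\<Prod>x\<in>A. if x \<in> R then f x else g x) = prod f (A \<inter> {x. x \<in> R}) * prod g (A \<inter> - {x. x \<in> R})"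
    by (rule prod.If_cases[OF assms])
  moreover have "A \<inter> {x. x \<in> R} = R \<inter> A" "A \<inter> - {x. x \<in> R} = A - R" by auto
  ultimately show ?thesis by simp
qed

context net
begin

definition nu :: "'v set set \<Rightarrow> 'v \<Rightarrow> 'v set set \<Rightarrow> real" where
  "nu P v S = mu v (S \<union> (P \<inter> Einc v))"

fun NDf :: "'v set set \<Rightarrow> nat \<Rightarrow> 'v \<Rightarrow> real \<times> real" where
  "NDf P 0 a = (0, 0)"
| "NDf P (Suc j) a =
     (hom (CE a) (\<lambda>S. nu P a (insert (pe a) S)) (\<lambda>e. t * fst (NDf P j (other a e))) (\<lambda>e. snd (NDf P j (other a e))),
      hom (CE a) (nu P a) (\<lambda>e. t * fst (NDf P j (other a e))) (\<lambda>e. snd (NDf P j (other a e))))"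

definition NN :: "'v set set \<Rightarrow> 'v \<Rightarrow> real" where "NN P a = fst (NDf P (Suc n - dist a) a)"
definition DD :: "'v set set \<Rightarrow> 'v \<Rightarrow> real" where "DD P a = snd (NDf P (Suc n - dist a) a)"

lemma ND_rec:
  assumes a: "a \<in> BB"
  shows "NN P a = hom (CE a) (\<lambda>S. nu P a (insert (pe a) S)) (\<lambda>e. t * NN P (other a e)) (\<lambda>e. DD P (other a e))"
    and "DD P a = hom (CE a) (nu P a) (\<lambda>e. t * NN P (other a e)) (\<lambda>e. DD P (other a e))"
proof -
  have da: "dist a \<le> n" using a BB_iff by auto
  then have s: "Suc n - dist a = Suc (n - dist a)" by simp
  have c: "\<And>e. e \<in> CE a \<Longrightarrow> Suc n - dist (other a e) = n - dist a"
  proof -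
    fix e assume "e \<in> CE a"
    then have "other a e \<in> ch a" using other_CE by blast
    then have "dist (other a e) = Suc (dist a)" unfolding ch_def by auto
    then show "Suc n - dist (other a e) = n - dist a" by simp
  qed
  show "NN P a = hom (CE a) (\<lambda>S. nu P a (insert (pe a) S)) (\<lambda>e. t * NN P (other a e)) (\<lambda>e. DD P (other a e))"
    unfolding NN_def s NDf.simps fst_conv
    by (rule hom_cong) (auto simp: NN_def DD_def c)
  show "DD P a = hom (CE a) (nu P a) (\<lambda>e. t * NN P (other a e)) (\<lambda>e. DD P (other a e))"
    unfolding DD_def s NDf.simps snd_conv
    by (rule hom_cong) (auto simp: NN_def DD_def c)
qed

definition sel :: "'v set set \<Rightarrow> 'v \<Rightarrow> 'v set set \<Rightarrow> real" where
  "sel P c F = (if pe c \<in> F then NN P c else DD P c)"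

definition W :: "'v set set \<Rightarrow> nat \<Rightarrow> ('v set set \<Rightarrow> real) \<Rightarrow> real" where
  "W P L g = (\<Sum>F\<in>Pow (TL L). (\<Prod>v\<in>{v\<in>BB. dist v < L}. nu P v (F \<inter> Einc v)) * (\<Prod>e\<in>F. t)
       * (\<Prod>c\<in>Lev L. sel P c F) * g (F \<inter> Einc r))"

definition ZT :: "'v set set \<Rightarrow> ('v set set \<Rightarrow> real) \<Rightarrow> real" where
  "ZT P g = (\<Sum>F\<in>Pow TT. (\<Prod>v\<in>BB. nu P v (F \<inter> Einc v)) * (\<Prod>e\<in>F. t) * g (F \<inter> Einc r))"

lemma W_top: "W P (Suc n) g = ZT P g"
proof -
  have "Lev (Suc n) = {}" unfolding Lev_def using BB_iff by auto
  moreover have "{v\<in>BB. dist v < Suc n} = BB" using BB_iff by auto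
  ultimately show ?thesis unfolding W_def ZT_def TL_top by simp
qed

lemma sel_sum:
  assumes a: "a \<in> Lev L" and L: "L \<ge> 1" and F: "F \<subseteq> TL L"
  shows "(\<Sum>S\<in>Pow (CE a). nu P a ((F \<inter> Einc a) \<union> S) * (\<Prod>e\<in>S. t * NN P (other a e)) * (\<Prod>e\<in>CE a - S. DD P (other a e)))
       = sel P a F"
proof -
  have aB: "a \<in> BB" "dist a = L" using a unfolding Lev_def by auto
  have d0: "dist a > 0" using aB L by simp
  have FE: "F \<inter> Einc a = (if pe a \<in> F then {pe a} else {})"
  proof -
    have "F \<inter> Einc a \<subseteq> {pe a}"
    proof
      fix e assume e: "e \<in> F \<inter> Einc a"
      then have "e \<in> Einc a \<inter> TT" "\<forall>v\<in>e. dist v \<le> L" using F unfolding TL_def by auto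
      then have "e = pe a \<or> e \<in> CE a" using Einc_TT[OF aB(1)] d0 by (auto split: if_splits)
      moreover have "e \<notin> CE a"
      proof
        assume "e \<in> CE a"
        then have o: "other a e \<in> ch a" "e = {a, other a e}" using other_CE by auto
        then have "other a e \<in> e" by blast
        then have "dist (other a e) \<le> L" using \<open>\<forall>v\<in>e. dist v \<le> L\<close> by blast
        then show False using o(1) aB unfolding ch_def by auto
      qed
      ultimately show "e \<in> {pe a}" by auto
    qed
    moreover have "pe a \<in> Einc a" using pe_Einc[OF aB(1) d0] .
    ultimately show ?thesis by auto
  qed
  show ?thesis
  proof (cases "pe a \<in> F")
    case True
    then show ?thesis unfolding sel_def FE ND_rec[OF aB(1)] hom_def by simp
  next
    case False
    then show ?thesis unfolding sel_def FE ND_rec[OF aB(1)] hom_def by simp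
  qed
qed

lemma R_edges:
  assumes "e \<in> (\<Union>a\<in>Lev L. CE a)"
  obtains a c where "a \<in> Lev L" "c \<in> ch a" "e = {a, c}" "dist a = L" "dist c = Suc L"
  using assms unfolding CE_def Lev_def ch_def by auto

lemma W_step:
  assumes L: "1 \<le> L" "L \<le> n"
  shows "W P (Suc L) g = W P L g"
proof -
  let ?X = "\<Union>a\<in>Lev L. CE a"
  define head where "head F' = (\<Prod>v\<in>{v\<in>BB. dist v < L}. nu P v (F' \<inter> Einc v)) * (\<Prod>e\<in>F'. t) * g (F' \<inter> Einc r)" for F'
  define h where "h a F' S = nu P a ((F' \<inter> Einc a) \<union> S) * (\<Prod>e\<in>S. t * NN P (other a e)) * (\<Prod>e\<in>CE a - S. DD P (other a e))" for a F' S
  define tm where "tm F = (\<Prod>v\<in>{v\<in>BB. dist v < Suc L}. nu P v (F \<inter> Einc v)) * (\<Prod>e\<in>F. t) * (\<Prod>c\<in>Lev (Suc L). sel P c F) * g (F \<inter> Einc r)" for F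
  have finX: "finite ?X" using fin_Lev fin_CE by auto
  have W1: "W P (Suc L) g = (\<Sum>F'\<in>Pow (TL L). \<Sum>R\<in>Pow ?X. tm (F' \<union> R))"
    unfolding W_def tm_def TL_Suc[OF L(1)] by (rule sum_pow_union[OF fin_TL finX TL_disj])
  have LevB: "\<And>a. a \<in> Lev L \<Longrightarrow> a \<in> BB \<and> dist a = L" unfolding Lev_def by auto
  have CEd: "\<And>a b. a \<in> Lev L \<Longrightarrow> b \<in> Lev L \<Longrightarrow> a \<noteq> b \<Longrightarrow> CE a \<inter> CE b = {}"
    using CE_disj LevB by blast
  have key: "tm (F' \<union> R) = head F' * (\<Prod>a\<in>Lev L. h a F' (R \<inter> CE a))"
    if F': "F' \<subseteq> TL L" and R: "R \<subseteq> ?X" for F' R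
  proof -
    have FR: "F' \<inter> R = {}" using F' R TL_disj by blast
    have finF': "finite F'" "finite R" using finite_subset[OF F' fin_TL] finite_subset[OF R finX] by auto
    have vs: "{v\<in>BB. dist v < Suc L} = {v\<in>BB. dist v < L} \<union> Lev L"
      "{v\<in>BB. dist v < L} \<inter> Lev L = {}" unfolding Lev_def by auto
    have p1: "(\<Prod>v\<in>{v\<in>BB. dist v < Suc L}. nu P v ((F' \<union> R) \<inter> Einc v))
        = (\<Prod>v\<in>{v\<in>BB. dist v < L}. nu P v ((F' \<union> R) \<inter> Einc v)) * (\<Prod>a\<in>Lev L. nu P a ((F' \<union> R) \<inter> Einc a))"
      unfolding vs(1) by (rule prod.union_disjoint) (use fin_BB fin_Lev vs(2) in auto)
    have p2: "(\<Prod>v\<in>{v\<in>BB. dist v < L}. nu P v ((F' \<union> R) \<inter> Einc v)) = (\<Prod>v\<in>{v\<in>BB. dist v < L}. nu P v (F' \<inter> Einc v))"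
    proof (rule prod.cong[OF refl])
      fix v assume v: "v \<in> {v\<in>BB. dist v < L}"
      have "R \<inter> Einc v = {}"
      proof (rule ccontr)
        assume "R \<inter> Einc v \<noteq> {}"
        then obtain e where e: "e \<in> R" "v \<in> e" unfolding inc_edges_def by auto
        from e R have "e \<in> ?X" by auto
        then obtain a c where "a \<in> Lev L" "c \<in> ch a" "e = {a, c}" "dist a = L" "dist c = Suc L" by (rule R_edges)
        then show False using e v by auto
      qed
      then show "nu P v ((F' \<union> R) \<inter> Einc v) = nu P v (F' \<inter> Einc v)"
        by (simp add: Int_Un_distrib2)
    qed
    have p3: "\<And>a. a \<in> Lev L \<Longrightarrow> (F' \<union> R) \<inter> Einc a = (F' \<inter> Einc a) \<union> (R \<inter> CE a)"
    proof -
      fix a assume a: "a \<in> Lev L"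
      have "R \<inter> Einc a = R \<inter> CE a"
      proof (intro equalityI subsetI)
        fix e assume e: "e \<in> R \<inter> Einc a"
        from e R have "e \<in> ?X" by auto
        then obtain a' c where ac: "a' \<in> Lev L" "c \<in> ch a'" "e = {a', c}" "dist a' = L" "dist c = Suc L"
          by (rule R_edges)
        have "a \<in> e" using e unfolding inc_edges_def by auto
        then have "a = a'" using ac LevB[OF a] by auto
        then show "e \<in> R \<inter> CE a" using e ac unfolding CE_def by auto
      next
        fix e assume "e \<in> R \<inter> CE a"
        then show "e \<in> R \<inter> Einc a" using CE_sub_Einc by auto
      qed
      then show "(F' \<union> R) \<inter> Einc a = (F' \<inter> Einc a) \<union> (R \<inter> CE a)" by (simp add: Int_Un_distrib2)
    qed
    have p4: "(\<Prod>e\<in>F' \<union> R. t) = (\<Prod>e\<in>F'. t) * (\<Prod>a\<in>Lev L. \<Prod>e\<in>R \<inter> CE a. t)"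
    proof -
      have "(\<Prod>e\<in>F' \<union> R. t) = (\<Prod>e\<in>F'. t) * (\<Prod>e\<in>R. t)"
        by (rule prod.union_disjoint) (use finF' FR in auto)
      moreover have "R = (\<Union>a\<in>Lev L. R \<inter> CE a)" using R by auto
      moreover have "(\<Prod>e\<in>(\<Union>a\<in>Lev L. R \<inter> CE a). t) = (\<Prod>a\<in>Lev L. \<Prod>e\<in>R \<inter> CE a. t)"
        by (rule prod.UNION_disjoint) (use fin_Lev finF' CEd in auto)
      ultimately show ?thesis by simp
    qed
    have p5: "(\<Prod>c\<in>Lev (Suc L). sel P c (F' \<union> R))
        = (\<Prod>a\<in>Lev L. (\<Prod>e\<in>R \<inter> CE a. NN P (other a e)) * (\<Prod>e\<in>CE a - R. DD P (other a e)))"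
    proof -
      have img: "par ` Lev (Suc L) \<subseteq> Lev L"
        using par_BB unfolding Lev_def by fastforce
      have fib: "{c \<in> Lev (Suc L). par c = a} = ch a" if a: "a \<in> Lev L" for a
      proof (intro equalityI subsetI)
        fix c assume "c \<in> {c \<in> Lev (Suc L). par c = a}"
        then have c: "c \<in> BB" "dist c = Suc L" "par c = a" unfolding Lev_def by auto
        then show "c \<in> ch a" using par_ch[of c] by auto
      next
        fix c assume c: "c \<in> ch a"
        then have "par c = a" using ch_par LevB[OF a] by blast
        then show "c \<in> {c \<in> Lev (Suc L). par c = a}" using c LevB[OF a] unfolding ch_def Lev_def by auto
      qed
      have "(\<Prod>c\<in>Lev (Suc L). sel P c (F' \<union> R)) = (\<Prod>a\<in>Lev L. \<Prod>c\<in>{c \<in> Lev (Suc L). par c = a}. sel P c (F' \<union> R))"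
        by (rule prod.group[symmetric]) (use fin_Lev img in auto)
      also have "\<dots> = (\<Prod>a\<in>Lev L. \<Prod>c\<in>ch a. sel P c (F' \<union> R))"
        by (rule prod.cong[OF refl]) (simp add: fib)
      also have "\<dots> = (\<Prod>a\<in>Lev L. (\<Prod>e\<in>R \<inter> CE a. NN P (other a e)) * (\<Prod>e\<in>CE a - R. DD P (other a e)))"
      proof (rule prod.cong[OF refl])
        fix a assume a: "a \<in> Lev L"
        have inj: "inj_on (\<lambda>c. {a, c}) (ch a)"
        proof (rule inj_onI)
          fix c c' assume c: "c \<in> ch a" "c' \<in> ch a" "{a, c} = {a, c'}"
          have "c \<noteq> a" "c' \<noteq> a" using c unfolding ch_def by auto
          then show "c = c'" using c(3) by (auto simp: doubleton_eq_iff)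
        qed
        have "(\<Prod>e\<in>CE a. if e \<in> R then NN P (other a e) else DD P (other a e))
            = (\<Prod>c\<in>ch a. if {a, c} \<in> R then NN P (other a {a, c}) else DD P (other a {a, c}))"
          unfolding CE_def by (rule prod.reindex[OF inj, unfolded comp_def])
        also have "\<dots> = (\<Prod>c\<in>ch a. sel P c (F' \<union> R))"
        proof (rule prod.cong[OF refl])
          fix c assume c: "c \<in> ch a"
          have pc: "par c = a" using ch_par c LevB[OF a] by blast
          have ca: "c \<noteq> a" using c unfolding ch_def by auto
          have pe: "pe c = {a, c}" unfolding pe_def pc ..
          have "pe c \<notin> F'"
          proof
            assume "pe c \<in> F'"
            then have "\<forall>v\<in>pe c. dist v \<le> L" using F' unfolding TL_def by auto
            then show False using c LevB[OF a] unfolding pe ch_def by auto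
          qed
          then show "(if {a, c} \<in> R then NN P (other a {a, c}) else DD P (other a {a, c})) = sel P c (F' \<union> R)"
            unfolding sel_def using other_eq[OF ca] pe by auto
        qed
        finally have "(\<Prod>c\<in>ch a. sel P c (F' \<union> R)) = (\<Prod>e\<in>CE a. if e \<in> R then NN P (other a e) else DD P (other a e))" ..
        also have "\<dots> = (\<Prod>e\<in>R \<inter> CE a. NN P (other a e)) * (\<Prod>e\<in>CE a - R. DD P (other a e))"
          by (rule prod_if_split[OF fin_CE])
        finally show "(\<Prod>c\<in>ch a. sel P c (F' \<union> R)) = (\<Prod>e\<in>R \<inter> CE a. NN P (other a e)) * (\<Prod>e\<in>CE a - R. DD P (other a e))" .
      qed
      finally show ?thesis .
    qed
    have p6: "(F' \<union> R) \<inter> Einc r = F' \<inter> Einc r"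
    proof -
      have "R \<inter> Einc r = {}"
      proof (rule ccontr)
        assume "R \<inter> Einc r \<noteq> {}"
        then obtain e where e: "e \<in> R" "r \<in> e" unfolding inc_edges_def by auto
        from e R have "e \<in> ?X" by auto
        then obtain a c where "a \<in> Lev L" "c \<in> ch a" "e = {a, c}" "dist a = L" "dist c = Suc L" by (rule R_edges)
        then show False using e L dist_r by auto
      qed
      then show ?thesis by (simp add: Int_Un_distrib2)
    qed
    have hh: "h a F' (R \<inter> CE a) = nu P a ((F' \<union> R) \<inter> Einc a) * (\<Prod>e\<in>R \<inter> CE a. t) *
                 ((\<Prod>e\<in>R \<inter> CE a. NN P (other a e)) * (\<Prod>e\<in>CE a - R. DD P (other a e)))" if "a \<in> Lev L" for a
    proof -
      have "CE a - R \<inter> CE a = CE a - R" by auto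
      then show ?thesis unfolding h_def p3[OF that] by (simp add: prod.distrib mult_ac)
    qed
    have "tm (F' \<union> R) = ((\<Prod>v\<in>{v\<in>BB. dist v < L}. nu P v (F' \<inter> Einc v)) * (\<Prod>e\<in>F'. t) * g (F' \<inter> Einc r))
        * ((\<Prod>a\<in>Lev L. nu P a ((F' \<union> R) \<inter> Einc a)) * (\<Prod>a\<in>Lev L. \<Prod>e\<in>R \<inter> CE a. t)
           * (\<Prod>a\<in>Lev L. (\<Prod>e\<in>R \<inter> CE a. NN P (other a e)) * (\<Prod>e\<in>CE a - R. DD P (other a e))))"
      unfolding tm_def p1 p2 p4 p5 p6 by (simp only: mult_ac)
    also have "\<dots> = head F' * ((\<Prod>a\<in>Lev L. nu P a ((F' \<union> R) \<inter> Einc a)) * (\<Prod>a\<in>Lev L. \<Prod>e\<in>R \<inter> CE a. t)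
           * (\<Prod>a\<in>Lev L. (\<Prod>e\<in>R \<inter> CE a. NN P (other a e)) * (\<Prod>e\<in>CE a - R. DD P (other a e))))"
      by (simp only: head_def)
    also have "(\<Prod>a\<in>Lev L. nu P a ((F' \<union> R) \<inter> Einc a)) * (\<Prod>a\<in>Lev L. \<Prod>e\<in>R \<inter> CE a. t)
           * (\<Prod>a\<in>Lev L. (\<Prod>e\<in>R \<inter> CE a. NN P (other a e)) * (\<Prod>e\<in>CE a - R. DD P (other a e)))
        = (\<Prod>a\<in>Lev L. h a F' (R \<inter> CE a))"
      unfolding prod.distrib[symmetric] by (rule prod.cong[OF refl]) (rule hh[symmetric])
    finally show ?thesis .
  qed
  have inner: "(\<Sum>R\<in>Pow ?X. \<Prod>a\<in>Lev L. h a F' (R \<inter> CE a)) = (\<Prod>a\<in>Lev L. sel P a F')"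
    if F': "F' \<subseteq> TL L" for F'
  proof -
    have "(\<Sum>R\<in>Pow ?X. \<Prod>a\<in>Lev L. h a F' (R \<inter> CE a)) = (\<Prod>a\<in>Lev L. \<Sum>S\<in>Pow (CE a). h a F' S)"
      by (rule sum_pow_prod_disjoint) (use fin_Lev fin_CE CEd in auto)
    also have "\<dots> = (\<Prod>a\<in>Lev L. sel P a F')"
      by (rule prod.cong[OF refl]) (unfold h_def, rule sel_sum[OF _ L(1) F'])
    finally show ?thesis .
  qed
  have "W P (Suc L) g = (\<Sum>F'\<in>Pow (TL L). head F' * (\<Prod>a\<in>Lev L. sel P a F'))"
    unfolding W1
  proof (rule sum.cong[OF refl])
    fix F' assume F': "F' \<in> Pow (TL L)"
    have "(\<Sum>R\<in>Pow ?X. tm (F' \<union> R)) = (\<Sum>R\<in>Pow ?X. head F' * (\<Prod>a\<in>Lev L. h a F' (R \<inter> CE a)))"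
      by (rule sum.cong[OF refl]) (use key F' in auto)
    also have "\<dots> = head F' * (\<Prod>a\<in>Lev L. sel P a F')"
      unfolding sum_distrib_left[symmetric] using inner F' by simp
    finally show "(\<Sum>R\<in>Pow ?X. tm (F' \<union> R)) = head F' * (\<Prod>a\<in>Lev L. sel P a F')" .
  qed
  also have "\<dots> = W P L g"
    unfolding W_def head_def by (rule sum.cong[OF refl]) (simp add: mult_ac)
  finally show ?thesis .
qed

end



lemma hom_cong_c:
  assumes "\<And>S. S \<subseteq> C \<Longrightarrow> c S = c' S"
  shows "hom C c p q = hom C c' p q"
  unfolding hom_def using assms by (intro sum.cong refl arg_cong2[where f="(*)"]) auto

lemma hom_nonneg:
  assumes "\<And>S. S \<subseteq> C \<Longrightarrow> 0 \<le> c S" "\<And>e. e \<in> C \<Longrightarrow> 0 \<le> p e" "\<And>e. e \<in> C \<Longrightarrow> 0 \<le> q e"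
  shows "0 \<le> hom C c p q"
  unfolding hom_def using assms
  by (intro sum_nonneg mult_nonneg_nonneg prod_nonneg) auto

context net
begin

lemma W_all_aux: "j \<le> n \<Longrightarrow> W P (Suc n - j) g = W P (Suc n) g"
proof (induction j)
  case 0
  then show ?case by simp
next
  case (Suc j)
  then have "W P (Suc n - j) g = W P (Suc n) g" by simp
  moreover have "W P (Suc (n - j)) g = W P (n - j) g" using Suc.prems by (intro W_step) auto
  moreover have "Suc n - j = Suc (n - j)" "Suc n - Suc j = n - j" using Suc.prems by auto
  ultimately show ?case by simp
qed

lemma W_all:
  assumes "1 \<le> L" "L \<le> Suc n"
  shows "W P L g = W P (Suc n) g"
  using W_all_aux[of "Suc n - L" P g] assms by simp

lemma ch_r_Lev1: "ch r = Lev 1"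
proof (intro equalityI subsetI)
  fix c assume "c \<in> ch r" then show "c \<in> Lev 1" unfolding ch_def Lev_def using dist_r by auto
next
  fix c assume c: "c \<in> Lev 1"
  then have cB: "c \<in> BB" "dist c = 1" unfolding Lev_def by auto
  then have p: "par c \<in> BB" "adj (par c) c" "Suc (dist (par c)) = dist c" using par_BB by auto
  then have "par c = r" using cB dist0 BB_iff by auto
  then show "c \<in> ch r" using p cB dist_r unfolding ch_def by auto
qed

lemma W_1:
  assumes n: "1 \<le> n" and P: "P \<subseteq> OE"
  shows "W P 1 g = hom (Einc r) (\<lambda>S. mu r S * g S) (\<lambda>e. t * NN P (other r e)) (\<lambda>e. DD P (other r e))"
proof -
  have v1: "{v\<in>BB. dist v < 1} = {r}" using r_BB dist_r dist0 BB_iff by auto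
  have ErT: "Einc r \<subseteq> TT" using Einc_sub_TT[OF r_BB] n dist_r by simp
  have PE: "P \<inter> Einc r = {}" using P ErT unfolding OE_def by auto
  have CEr: "CE r = Einc r" using Einc_inner[OF r_BB] n dist_r by simp
  have sel: "(\<Prod>c\<in>Lev 1. sel P c F) = (\<Prod>e\<in>F. NN P (other r e)) * (\<Prod>e\<in>Einc r - F. DD P (other r e))"
    if F: "F \<subseteq> Einc r" for F
  proof -
    have inj: "inj_on (\<lambda>c. {r, c}) (ch r)"
    proof (rule inj_onI)
      fix c c' assume c: "c \<in> ch r" "c' \<in> ch r" "{r, c} = {r, c'}"
      have "c \<noteq> r" "c' \<noteq> r" using c unfolding ch_def by auto
      then show "c = c'" using c(3) by (auto simp: doubleton_eq_iff)
    qed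
    have "(\<Prod>e\<in>Einc r. if e \<in> F then NN P (other r e) else DD P (other r e))
        = (\<Prod>c\<in>ch r. if {r, c} \<in> F then NN P (other r {r, c}) else DD P (other r {r, c}))"
      unfolding CEr[symmetric] CE_def by (rule prod.reindex[OF inj, unfolded comp_def])
    also have "\<dots> = (\<Prod>c\<in>Lev 1. sel P c F)"
      unfolding ch_r_Lev1[symmetric]
    proof (rule prod.cong[OF refl])
      fix c assume c: "c \<in> ch r"
      have pc: "par c = r" using ch_par c r_BB by blast
      have ca: "c \<noteq> r" using c unfolding ch_def by auto
      have pe: "pe c = {r, c}" unfolding pe_def pc ..
      show "(if {r, c} \<in> F then NN P (other r {r, c}) else DD P (other r {r, c})) = sel P c F"
        unfolding sel_def using other_eq[OF ca] pe by auto
    qed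
    finally have "(\<Prod>c\<in>Lev 1. sel P c F) = (\<Prod>e\<in>Einc r. if e \<in> F then NN P (other r e) else DD P (other r e))" ..
    also have "\<dots> = (\<Prod>e\<in>F \<inter> Einc r. NN P (other r e)) * (\<Prod>e\<in>Einc r - F. DD P (other r e))"
      by (rule prod_if_split[OF fin_Einc])
    finally show ?thesis using F by (simp add: Int_absorb2)
  qed
  show ?thesis
    unfolding W_def TL_1[OF n] v1 hom_def
  proof (rule sum.cong[OF refl])
    fix F assume F: "F \<in> Pow (Einc r)"
    then have FE: "F \<inter> Einc r = F" by auto
    have nu: "nu P r (F \<inter> Einc r) = mu r F" unfolding nu_def using PE FE by simp
    show "(\<Prod>v\<in>{r}. nu P v (F \<inter> Einc v)) * (\<Prod>e\<in>F. t) * (\<Prod>c\<in>Lev 1. sel P c F) * g (F \<inter> Einc r)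
        = mu r F * g F * (\<Prod>e\<in>F. t * NN P (other r e)) * (\<Prod>e\<in>Einc r - F. DD P (other r e))"
      using F nu FE unfolding sel[OF PowD[OF F]] by (simp add: prod.distrib mult_ac)
  qed
qed

definition Zfull :: "('v set set \<Rightarrow> real) \<Rightarrow> real" where
  "Zfull g = (\<Sum>F\<in>Pow Ed. global_measure V adj mu F * t ^ card F * g (F \<inter> Einc r))"

definition KK :: "'v set set \<Rightarrow> real" where
  "KK P = (\<Prod>v\<in>V - BB. mu v (P \<inter> Einc v)) * (\<Prod>e\<in>P. t)"

lemma fin_OE: "finite OE" unfolding OE_def using fin_Ed by auto

lemma Zfull_cond:
  assumes n: "1 \<le> n"
  shows "Zfull g = (\<Sum>P\<in>Pow OE. KK P * ZT P g)"
proof -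
  have Ed: "Ed = OE \<union> TT" "OE \<inter> TT = {}" unfolding OE_def TT_def by auto
  have ErT: "Einc r \<subseteq> TT" using Einc_sub_TT[OF r_BB] n dist_r by simp
  have "Zfull g = (\<Sum>P\<in>Pow OE. \<Sum>F\<in>Pow TT. global_measure V adj mu (P \<union> F) * t ^ card (P \<union> F) * g ((P \<union> F) \<inter> Einc r))"
    unfolding Zfull_def Ed(1) by (rule sum_pow_union[OF fin_OE fin_TT Ed(2)])
  also have "\<dots> = (\<Sum>P\<in>Pow OE. KK P * ZT P g)"
  proof (rule sum.cong[OF refl])
    fix P assume P: "P \<in> Pow OE"
    show "(\<Sum>F\<in>Pow TT. global_measure V adj mu (P \<union> F) * t ^ card (P \<union> F) * g ((P \<union> F) \<inter> Einc r)) = KK P * ZT P g"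
      unfolding ZT_def sum_distrib_left
    proof (rule sum.cong[OF refl])
      fix F assume F: "F \<in> Pow TT"
      have PF: "P \<inter> F = {}" using P F Ed by auto
      have finP: "finite P" "finite F" using P F fin_OE fin_TT finite_subset by auto
      have gm: "global_measure V adj mu (P \<union> F) = (\<Prod>v\<in>V - BB. mu v (P \<inter> Einc v)) * (\<Prod>v\<in>BB. nu P v (F \<inter> Einc v))"
      proof -
        have "global_measure V adj mu (P \<union> F) = (\<Prod>v\<in>V - BB. mu v ((P \<union> F) \<inter> Einc v)) * (\<Prod>v\<in>BB. mu v ((P \<union> F) \<inter> Einc v))"
          unfolding global_measure_def using prod.subset_diff[OF BB_V finV] by simp
        moreover have "(\<Prod>v\<in>V - BB. mu v ((P \<union> F) \<inter> Einc v)) = (\<Prod>v\<in>V - BB. mu v (P \<inter> Einc v))"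
        proof (rule prod.cong[OF refl])
          fix v assume "v \<in> V - BB"
          then have "F \<inter> Einc v = {}" using Einc_outside F by auto
          then show "mu v ((P \<union> F) \<inter> Einc v) = mu v (P \<inter> Einc v)" by (simp add: Int_Un_distrib2)
        qed
        moreover have "(\<Prod>v\<in>BB. mu v ((P \<union> F) \<inter> Einc v)) = (\<Prod>v\<in>BB. nu P v (F \<inter> Einc v))"
          unfolding nu_def by (rule prod.cong[OF refl]) (simp add: Int_Un_distrib2 Un_commute)
        ultimately show ?thesis by simp
      qed
      have tp: "t ^ card (P \<union> F) = (\<Prod>e\<in>P. t) * (\<Prod>e\<in>F. t)"
        using finP PF by (simp add: card_Un_disjoint power_add)
      have gg: "(P \<union> F) \<inter> Einc r = F \<inter> Einc r" using P ErT Ed by auto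
      show "global_measure V adj mu (P \<union> F) * t ^ card (P \<union> F) * g ((P \<union> F) \<inter> Einc r)
          = KK P * ((\<Prod>v\<in>BB. nu P v (F \<inter> Einc v)) * (\<Prod>e\<in>F. t) * g (F \<inter> Einc r))"
        unfolding gm tp gg KK_def by (simp add: mult_ac)
    qed
  qed
  finally show ?thesis .
qed

end



context net
begin

lemma x_nonneg: "0 \<le> xiter adj mu t m i j"
proof (induction m arbitrary: i j)
  case 0
  then show ?case by simp
next
  case (Suc m)
  have "0 \<le> cavity_op adj mu (xiter adj mu t m) i j"
  proof (cases "adj i j")
    case True
    have iV: "i \<in> V" using adj_V[OF True] by simp
    have e: "{i, j} \<in> Einc i" using Einc_iff True by blast
    have w: "\<forall>x\<in>Einc i - {{i, j}}. 0 \<le> local_weights (xiter adj mu t m) i x"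
      unfolding local_weights_def using Suc.IH by simp
    show ?thesis unfolding cavity_op_def using True
      cavity_ratio_nonneg[OF meas_v[OF iV] mu_empty_pos[OF iV] e w] by simp
  next
    case False
    then show ?thesis unfolding cavity_op_def by simp
  qed
  then show ?case using tpos by simp
qed

lemma ch_props: "c \<in> ch a \<Longrightarrow> a \<in> BB \<Longrightarrow> c \<in> BB \<and> dist c = Suc (dist a) \<and> par c = a"
  using ch_par unfolding ch_def by auto

lemma NDf_nonneg:
  assumes P: "P \<subseteq> Ed"
  shows "a \<in> BB \<Longrightarrow> dist a > 0 \<Longrightarrow> 0 \<le> fst (NDf P j a) \<and> 0 \<le> snd (NDf P j a)"
proof (induction j arbitrary: a)
  case 0
  then show ?case by simp
next
  case (Suc j)
  have aV: "a \<in> V" using Suc.prems BB_V by auto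
  have pe: "pe a \<in> Einc a" using pe_Einc Suc.prems by auto
  have ch: "\<And>e. e \<in> CE a \<Longrightarrow> other a e \<in> BB \<and> dist (other a e) > 0"
    using other_CE ch_props Suc.prems by fastforce
  have pq: "\<And>e. e \<in> CE a \<Longrightarrow> 0 \<le> t * fst (NDf P j (other a e)) \<and> 0 \<le> snd (NDf P j (other a e))"
    using Suc.IH ch tpos by auto
  have c1: "\<And>S. S \<subseteq> CE a \<Longrightarrow> 0 \<le> nu P a (insert (pe a) S)"
    unfolding nu_def using CE_sub_Einc pe by (intro measure_nonneg[OF meas_v[OF aV]]) auto
  have c2: "\<And>S. S \<subseteq> CE a \<Longrightarrow> 0 \<le> nu P a S"
    unfolding nu_def using CE_sub_Einc by (intro measure_nonneg[OF meas_v[OF aV]]) auto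
  have h1: "0 \<le> hom (CE a) (\<lambda>S. nu P a (insert (pe a) S)) (\<lambda>e. t * fst (NDf P j (other a e))) (\<lambda>e. snd (NDf P j (other a e)))"
    by (rule hom_nonneg) (use c1 pq in auto)
  have h2: "0 \<le> hom (CE a) (nu P a) (\<lambda>e. t * fst (NDf P j (other a e))) (\<lambda>e. snd (NDf P j (other a e)))"
    by (rule hom_nonneg) (use c2 pq in auto)
  show ?case unfolding NDf.simps fst_conv snd_conv using h1 h2 by simp
qed

lemma ND_nonneg:
  assumes "P \<subseteq> Ed" "a \<in> BB" "dist a > 0"
  shows "0 \<le> NN P a" "0 \<le> DD P a"
  using NDf_nonneg[OF assms] unfolding NN_def DD_def by auto

lemma arith_up: "(zd::real) > 0 \<Longrightarrow> nn * zd \<le> dd * zc \<Longrightarrow> 0 \<le> t \<Longrightarrow> t * nn \<le> t * (zc / zd) * dd"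
proof -
  assume z: "zd > 0" and h: "nn * zd \<le> dd * zc" and t: "0 \<le> t"
  have "nn \<le> zc / zd * dd" using z h by (simp add: field_simps)
  then have "t * nn \<le> t * (zc / zd * dd)" using t by (rule mult_left_mono)
  then show ?thesis by (simp only: mult.assoc)
qed

lemma arith_low: "(zd::real) > 0 \<Longrightarrow> dd * zc \<le> nn * zd \<Longrightarrow> 0 \<le> t \<Longrightarrow> t * (zc / zd) * dd \<le> t * nn"
proof -
  assume z: "zd > 0" and h: "dd * zc \<le> nn * zd" and t: "0 \<le> t"
  have "zc / zd * dd \<le> nn" using z h by (simp add: field_simps)
  then have "t * (zc / zd * dd) \<le> t * nn" using t by (rule mult_left_mono)
  then show ?thesis by (simp only: mult.assoc)
qed

lemma claim:
  assumes P: "P \<subseteq> OE"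
  shows "\<forall>a. a \<in> BB \<longrightarrow> 0 < dist a \<longrightarrow> dist a + m \<le> n \<longrightarrow>
     (even m \<longrightarrow> xiter adj mu t m a (par a) * DD P a \<le> t * NN P a) \<and>
     (odd m \<longrightarrow> t * NN P a \<le> xiter adj mu t m a (par a) * DD P a)"
proof (induction m)
  have PE: "P \<subseteq> Ed" using P unfolding OE_def by auto
  case 0
  show ?case using ND_nonneg[OF PE] tpos by simp
next
  case (Suc m)
  have PE: "P \<subseteq> Ed" using P unfolding OE_def by auto
  show ?case
  proof (intro allI impI)
    fix a assume a: "a \<in> BB" "0 < dist a" "dist a + Suc m \<le> n"
    let ?xm = "xiter adj mu t m"
    let ?E = "Einc a" let ?e0 = "pe a" let ?xw = "local_weights ?xm a"
    let ?p = "\<lambda>e. t * NN P (other a e)" let ?q = "\<lambda>e. DD P (other a e)"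
    have lt: "dist a < n" using a by simp
    have aV: "a \<in> V" using a BB_V by auto
    have Ea: "?E = insert ?e0 (CE a)" using Einc_inner[OF a(1) lt] a(2) by simp
    have e0n: "?e0 \<notin> CE a" using pe_notin_CE a by auto
    have EC: "?E - {?e0} = CE a" using Ea e0n by auto
    have e0: "?e0 \<in> ?E" using Ea by simp
    have cm: "cavity_monotone ?E (mu a)" using cm_v[OF aV] .
    have PEa: "P \<inter> ?E = {}" using Einc_sub_TT[OF a(1) lt] P unfolding OE_def by auto
    have NNa: "NN P a = hom (CE a) (\<lambda>S. mu a (insert ?e0 S)) ?p ?q"
      unfolding ND_rec(1)[OF a(1)] by (rule hom_cong_c) (simp add: nu_def PEa)
    have DDa: "DD P a = hom (CE a) (mu a) ?p ?q"
      unfolding ND_rec(2)[OF a(1)] by (rule hom_cong_c) (simp add: nu_def PEa)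
    have xs: "xiter adj mu t (Suc m) a (par a) = t * cavity_ratio ?E (mu a) ?e0 ?xw"
    proof -
      have "adj a (par a)" using par_BB[OF a(1,2)] adj_sym by blast
      moreover have "{a, par a} = ?e0" unfolding pe_def by (simp add: insert_commute)
      ultimately show ?thesis by (simp add: cavity_op_def)
    qed
    have child: "\<And>e. e \<in> CE a \<Longrightarrow> other a e \<in> BB \<and> 0 < dist (other a e) \<and> dist (other a e) + m \<le> n
        \<and> par (other a e) = a \<and> ?xw e = ?xm (other a e) (par (other a e))"
    proof -
      fix e assume e: "e \<in> CE a"
      then have "other a e \<in> ch a" using other_CE by blast
      then show "other a e \<in> BB \<and> 0 < dist (other a e) \<and> dist (other a e) + m \<le> n
        \<and> par (other a e) = a \<and> ?xw e = ?xm (other a e) (par (other a e))"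
        using ch_props[of "other a e" a] a unfolding local_weights_def by auto
    qed
    have pq0: "\<And>e. e \<in> CE a \<Longrightarrow> 0 \<le> ?p e \<and> 0 \<le> ?q e"
      using ND_nonneg[OF PE] child tpos by auto
    have xw0: "\<forall>f\<in>?E - {?e0}. 0 \<le> ?xw f" unfolding local_weights_def using x_nonneg by simp
    have Zd: "Z_del ?E (mu a) ?e0 ?xw > 0"
      using Z_del_pos[OF meas_v[OF aV] mu_empty_pos[OF aV] xw0] .
    show "(even (Suc m) \<longrightarrow> xiter adj mu t (Suc m) a (par a) * DD P a \<le> t * NN P a) \<and>
          (odd (Suc m) \<longrightarrow> t * NN P a \<le> xiter adj mu t (Suc m) a (par a) * DD P a)"
    proof (cases "even m")
      case True
      have IH: "?xw e * ?q e \<le> ?p e" if e: "e \<in> CE a" for e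
      proof -
        note c = child[OF e]
        have "?xm (other a e) (par (other a e)) * DD P (other a e) \<le> t * NN P (other a e)"
          using Suc.IH c True by blast
        then show ?thesis using c by simp
      qed
      have pq: "\<forall>f\<in>?E - {?e0}. 0 \<le> ?p f \<and> 0 \<le> ?q f \<and> ?xw f * ?q f \<le> ?p f"
        using EC pq0 IH by auto
      have "NN P a * Z_del ?E (mu a) ?e0 ?xw \<le> DD P a * Z_con ?E (mu a) ?e0 ?xw"
        using G_hom_upper[OF cm e0 xw0 pq] unfolding NNa DDa EC .
      then have "t * NN P a \<le> t * (Z_con ?E (mu a) ?e0 ?xw / Z_del ?E (mu a) ?e0 ?xw) * DD P a"
        using Zd tpos by (intro arith_up) auto
      then show ?thesis using True unfolding xs cavity_ratio_def by simp
    next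
      case False
      have IH: "?p e \<le> ?xw e * ?q e" if e: "e \<in> CE a" for e
      proof -
        note c = child[OF e]
        have "t * NN P (other a e) \<le> ?xm (other a e) (par (other a e)) * DD P (other a e)"
          using Suc.IH c False by blast
        then show ?thesis using c by simp
      qed
      have pq: "\<forall>f\<in>?E - {?e0}. 0 \<le> ?p f \<and> 0 \<le> ?q f \<and> ?p f \<le> ?xw f * ?q f"
        using EC pq0 IH by auto
      have "DD P a * Z_con ?E (mu a) ?e0 ?xw \<le> NN P a * Z_del ?E (mu a) ?e0 ?xw"
        using G_hom_lower[OF cm e0 xw0 pq] unfolding NNa DDa EC .
      then have "t * (Z_con ?E (mu a) ?e0 ?xw / Z_del ?E (mu a) ?e0 ?xw) * DD P a \<le> t * NN P a"
        using Zd tpos by (intro arith_low) auto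
      then show ?thesis using False unfolding xs cavity_ratio_def by simp
    qed
  qed
qed

end



context net
begin

lemma ZT_W1:
  assumes n: "1 \<le> n" and P: "P \<subseteq> OE"
  shows "ZT P g = hom (Einc r) (\<lambda>S. mu r S * g S) (\<lambda>e. t * NN P (other r e)) (\<lambda>e. DD P (other r e))"
  using W_top[of P g] W_all[of 1 P g] W_1[OF n P, of g] n by simp

lemma root_child:
  assumes n: "1 \<le> n" and e: "e \<in> Einc r"
  shows "other r e \<in> BB \<and> dist (other r e) = 1 \<and> par (other r e) = r"
proof -
  have CEr: "CE r = Einc r" using Einc_inner[OF r_BB] n dist_r by simp
  then have "other r e \<in> ch r" using other_CE e by blast
  then show ?thesis using ch_props[of "other r e" r] r_BB dist_r by auto
qed

lemma root_bounds:
  assumes n: "n = Suc (Suc (2 * k))" and P: "P \<subseteq> OE"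
  shows "ZT P (\<lambda>S. real (card S)) \<le> Um (Einc r) (mu r) (local_weights (xiter adj mu t (2 * k + 1)) r) * ZT P (\<lambda>S. 1)"
    and "Um (Einc r) (mu r) (local_weights (xiter adj mu t (2 * k)) r) * ZT P (\<lambda>S. 1) \<le> ZT P (\<lambda>S. real (card S))"
proof -
  have n1: "1 \<le> n" using n by simp
  have PE: "P \<subseteq> Ed" using P unfolding OE_def by auto
  let ?p = "\<lambda>e. t * NN P (other r e)" let ?q = "\<lambda>e. DD P (other r e)"
  have cm: "cavity_monotone (Einc r) (mu r)" using cm_v[OF rV] .
  have Z1: "ZT P (\<lambda>S. 1) = hom (Einc r) (mu r) ?p ?q" unfolding ZT_W1[OF n1 P] by simp
  have Zc: "ZT P (\<lambda>S. real (card S)) = hom (Einc r) (\<lambda>S. mu r S * real (card S)) ?p ?q"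
    unfolding ZT_W1[OF n1 P] ..
  have pq0: "\<And>e. e \<in> Einc r \<Longrightarrow> 0 \<le> ?p e \<and> 0 \<le> ?q e"
    using root_child[OF n1] ND_nonneg[OF PE] tpos by auto
  have x0: "\<And>m. \<forall>e\<in>Einc r. 0 \<le> local_weights (xiter adj mu t m) r e"
    unfolding local_weights_def using x_nonneg by simp
  have up: "?p e \<le> local_weights (xiter adj mu t (2 * k + 1)) r e * ?q e" if e: "e \<in> Einc r" for e
  proof -
    note c = root_child[OF n1 e]
    have "odd (2 * k + 1)" by simp
    then have "t * NN P (other r e) \<le> xiter adj mu t (2 * k + 1) (other r e) (par (other r e)) * DD P (other r e)"
      using claim[OF P, of "2 * k + 1"] c n by auto
    then show ?thesis using c unfolding local_weights_def by simp
  qed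
  have low: "local_weights (xiter adj mu t (2 * k)) r e * ?q e \<le> ?p e" if e: "e \<in> Einc r" for e
  proof -
    note c = root_child[OF n1 e]
    have "even (2 * k)" by simp
    then have "xiter adj mu t (2 * k) (other r e) (par (other r e)) * DD P (other r e) \<le> t * NN P (other r e)"
      using claim[OF P, of "2 * k"] c n by auto
    then show ?thesis using c unfolding local_weights_def by simp
  qed
  show "ZT P (\<lambda>S. real (card S)) \<le> Um (Einc r) (mu r) (local_weights (xiter adj mu t (2 * k + 1)) r) * ZT P (\<lambda>S. 1)"
    unfolding Zc Z1 by (rule U_hom_upper[OF cm x0]) (use pq0 up in auto)
  show "Um (Einc r) (mu r) (local_weights (xiter adj mu t (2 * k)) r) * ZT P (\<lambda>S. 1) \<le> ZT P (\<lambda>S. real (card S))"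
    unfolding Zc Z1 by (rule U_hom_lower[OF cm x0]) (use pq0 low in auto)
qed

lemma KK_nonneg: "P \<subseteq> OE \<Longrightarrow> 0 \<le> KK P"
  unfolding KK_def using tpos BB_V
  by (intro mult_nonneg_nonneg prod_nonneg measure_nonneg[OF meas_v]) auto

lemma gm_nonneg: "F \<subseteq> Ed \<Longrightarrow> 0 \<le> global_measure V adj mu F"
  unfolding global_measure_def by (intro prod_nonneg measure_nonneg[OF meas_v]) auto

lemma Zfull1_pos: "Zfull (\<lambda>S. 1) > 0"
  unfolding Zfull_def
proof (rule sum_pos2[of _ "{}"])
  show "finite (Pow Ed)" using fin_Ed by simp
  show "{} \<in> Pow Ed" by simp
  have "global_measure V adj mu {} > 0" unfolding global_measure_def
    using mu_empty_pos by (intro prod_pos) simp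
  then show "0 < global_measure V adj mu {} * t ^ card {} * 1" by simp
  show "\<And>F. F \<in> Pow Ed \<Longrightarrow> 0 \<le> global_measure V adj mu F * t ^ card F * 1"
    using gm_nonneg tpos by auto
qed

lemma final:
  assumes n: "n = Suc (Suc (2 * k))"
  shows "Um (Einc r) (mu r) (local_weights (xiter adj mu t (2 * k)) r)
           \<le> E_net V adj mu t (\<lambda>F. real (card (F \<inter> Einc r)))
       \<and> E_net V adj mu t (\<lambda>F. real (card (F \<inter> Einc r)))
           \<le> Um (Einc r) (mu r) (local_weights (xiter adj mu t (2 * k + 1)) r)"
proof -
  have n1: "1 \<le> n" using n by simp
  let ?U0 = "Um (Einc r) (mu r) (local_weights (xiter adj mu t (2 * k)) r)"
  let ?U1 = "Um (Einc r) (mu r) (local_weights (xiter adj mu t (2 * k + 1)) r)"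
  have E: "E_net V adj mu t (\<lambda>F. real (card (F \<inter> Einc r))) = Zfull (\<lambda>S. real (card S)) / Zfull (\<lambda>S. 1)"
    unfolding E_net_def Z_net_def Zfull_def by simp
  have pos: "Zfull (\<lambda>S. 1) > 0" by (rule Zfull1_pos)
  have up: "Zfull (\<lambda>S. real (card S)) \<le> ?U1 * Zfull (\<lambda>S. 1)"
  proof -
    have "Zfull (\<lambda>S. real (card S)) = (\<Sum>P\<in>Pow OE. KK P * ZT P (\<lambda>S. real (card S)))"
      by (rule Zfull_cond[OF n1])
    also have "\<dots> \<le> (\<Sum>P\<in>Pow OE. KK P * (?U1 * ZT P (\<lambda>S. 1)))"
      by (rule sum_mono, rule mult_left_mono) (use root_bounds(1)[OF n] KK_nonneg in auto)
    also have "\<dots> = ?U1 * Zfull (\<lambda>S. 1)"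
      unfolding Zfull_cond[OF n1] sum_distrib_left by (simp add: mult_ac)
    finally show ?thesis .
  qed
  have low: "?U0 * Zfull (\<lambda>S. 1) \<le> Zfull (\<lambda>S. real (card S))"
  proof -
    have "?U0 * Zfull (\<lambda>S. 1) = (\<Sum>P\<in>Pow OE. KK P * (?U0 * ZT P (\<lambda>S. 1)))"
      unfolding Zfull_cond[OF n1] sum_distrib_left by (simp add: mult_ac)
    also have "\<dots> \<le> (\<Sum>P\<in>Pow OE. KK P * ZT P (\<lambda>S. real (card S)))"
      by (rule sum_mono, rule mult_left_mono) (use root_bounds(2)[OF n] KK_nonneg in auto)
    also have "\<dots> = Zfull (\<lambda>S. real (card S))"
      by (rule Zfull_cond[OF n1, symmetric])
    finally show ?thesis .
  qed
  show ?thesis unfolding E using up low pos by (simp add: divide_simps)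
qed

end


theorem mainTheorem7:
  fixes V :: "'v set" and adj :: "'v \<Rightarrow> 'v \<Rightarrow> bool"
    and mu :: "'v \<Rightarrow> 'v set set \<Rightarrow> real" and root :: 'v
    and k :: nat and t :: real
  assumes "finite V" and "simple_graph V adj" and "root \<in> V"
    and "cavity_monotone_network V adj mu"
    and "ball_is_tree V adj root (2 * k + 2)"
    and "t > 0"
  shows "Um (inc_edges adj root) (mu root) (local_weights (xiter adj mu t (2 * k)) root)
           \<le> E_net V adj mu t (\<lambda>F. real (card (F \<inter> inc_edges adj root)))
       \<and> E_net V adj mu t (\<lambda>F. real (card (F \<inter> inc_edges adj root)))
           \<le> Um (inc_edges adj root) (mu root) (local_weights (xiter adj mu t (2 * k + 1)) root)"
proof -
  interpret net V adj mu root "2 * k + 2" t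
    using assms by unfold_locales
  show ?thesis using final[of k] by simp
qed

end
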